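(* Let $X$ and $Y$ be rearrangement invariant spaces of complex valued functions on $\mathbb R^n$ and let $\alpha\in\mathcal A$. Let $u$ and $v$ be non-negative measurable functions on $\mathbb R^n$ such that $v$ is not almost everywhere zero. Suppose there exists $C>0$ such that, whenever $f$ is integrable and $uf\in X$, we have $v\widehat f\in Y$ and \[ \|v\widehat f\|_Y\le C\|uf\|_X. \] Then: $u>0$ almost everywhere; $v*q_1$ is bounded above; $0<v*\alpha<\infty$ almost everywhere; and, whenever $f$ is integrable and $uf\in X$, we have $(v*\alpha)\widehat f\in Y$ and \[ \|(v*\alpha)\widehat f\|_Y\le C\|uf\|_X. \]
   Context: The Fourier transform of an integrable $f\colon\mathbb R^n\to\mathbb C$ is $\widehat f(x)=\int_{\mathbb R^n}e^{-2\pi i x\cdot t}f(t)\,dt$. $\mathcal A=\{\alpha\colon\mathbb R^n\to(0,\infty) \text{ measurable}:\int_{\mathbb R^n}\alpha=1\}$. For $r>0$, $Q_r=(-r/2,r/2)^n$ and $q_r=\chi_{Q_r}$. Convolution: $v*\alpha(x)=\int_{\mathbb R^n}v(x-y)\alpha(y)\,dy$. A rearrangement invariant space $X$ (Bennett–Sharpley) is defined by a norm $\rho$ on non-negative measurable functions on $\mathbb R^n$ such that: $\rho(f)=0$ iff $f=0$ a.e., $\rho(af)=a\rho(f)$ for $a\ge0$, $\rho(f+g)\le\rho(f)+\rho(g)$; $0\le g\le f$ a.e. implies $\rho(g)\le\rho(f)$; $0\le f_k\uparrow f$ a.e. implies $\rho(f_k)\uparrow\rho(f)$; $\rho(\chi_E)<\infty$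 for every set $E$ of finite measure; for every $E$ of finite measure there is $C_E$ with $\int_E f\le C_E\rho(f)$; and $\rho(f)=\rho(g)$ whenever $f,g$ are equimeasurable. Then $X=\{f \text{ measurable}:\|f\|_X:=\rho(|f|)<\infty\}$. *)

theory Defs
  imports "HOL-Analysis.Analysis"
begin

definition fourier :: "('a::euclidean_space \<Rightarrow> complex) \<Rightarrow> 'a \<Rightarrow> complex" where
  "fourier f x = (LINT t|lebesgue. cis (- (2 * pi * (x \<bullet> t))) * f t)"

definition cube :: "real \<Rightarrow> 'a::euclidean_space set" where
  "cube r = {x. \<forall>i\<in>Basis. - (r/2) < x \<bullet> i \<and> x \<bullet> i < r/2}"

definition qcube :: "real \<Rightarrow> 'a::euclidean_space \<Rightarrow> real" where
  "qcube r = indicator (cube r)"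

definition alpha_class :: "('a::euclidean_space \<Rightarrow> real) set" where
  "alpha_class = {\<alpha>. \<alpha> \<in> borel_measurable lebesgue \<and> (\<forall>x. 0 < \<alpha> x) \<and>
                     (\<integral>\<^sup>+ x. ennreal (\<alpha> x) \<partial>lebesgue) = 1}"

definition conv :: "('a::euclidean_space \<Rightarrow> real) \<Rightarrow> ('a \<Rightarrow> real) \<Rightarrow> 'a \<Rightarrow> ennreal" where
  "conv v a x = (\<integral>\<^sup>+ y. ennreal (v (x - y) * a y) \<partial>lebesgue)"

definition equimeasurable :: "('a::euclidean_space \<Rightarrow> ennreal) \<Rightarrow> ('a \<Rightarrow> ennreal) \<Rightarrow> bool" where
  "equimeasurable f g \<longleftrightarrow>
     (\<forall>t::ennreal. emeasure lebesgue {x. t < f x} = emeasure lebesgue {x. t < g x})"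

text \<open>Rearrangement invariant Banach function norm (Bennett--Sharpley), acting on
  non-negative Lebesgue measurable functions with values in \<open>[0,\<infinity>]\<close>.\<close>
definition ri_norm :: "(('a::euclidean_space \<Rightarrow> ennreal) \<Rightarrow> ennreal) \<Rightarrow> bool" where
  "ri_norm \<rho> \<longleftrightarrow>
    (\<forall>f\<in>borel_measurable lebesgue. \<rho> f = 0 \<longleftrightarrow> (AE x in lebesgue. f x = 0)) \<and>
    (\<forall>f\<in>borel_measurable lebesgue. \<forall>a::real. a \<ge> 0 \<longrightarrow>
        \<rho> (\<lambda>x. ennreal a * f x) = ennreal a * \<rho> f) \<and>
    (\<forall>f\<in>borel_measurable lebesgue. \<forall>g\<in>borel_measurable lebesgue.
        \<rho> (\<lambda>x. f x + g x) \<le> \<rho> f + \<rho> g) \<and>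
    (\<forall>f\<in>borel_measurable lebesgue. \<forall>g\<in>borel_measurable lebesgue.
        (AE x in lebesgue. g x \<le> f x) \<longrightarrow> \<rho> g \<le> \<rho> f) \<and>
    (\<forall>F f. (\<forall>k. F k \<in> borel_measurable lebesgue) \<longrightarrow> f \<in> borel_measurable lebesgue \<longrightarrow>
        (AE x in lebesgue. incseq (\<lambda>k. F k x) \<and> f x = (SUP k. F k x)) \<longrightarrow>
        \<rho> f = (SUP k. \<rho> (F k))) \<and>
    (\<forall>E\<in>sets lebesgue. emeasure lebesgue E < \<infinity> \<longrightarrow> \<rho> (indicator E) < \<infinity>) \<and>
    (\<forall>E\<in>sets lebesgue. emeasure lebesgue E < \<infinity> \<longrightarrow>
        (\<exists>C::real. \<forall>f\<in>borel_measurable lebesgue.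
            (\<integral>\<^sup>+ x\<in>E. f x \<partial>lebesgue) \<le> ennreal C * \<rho> f)) \<and>
    (\<forall>f\<in>borel_measurable lebesgue. \<forall>g\<in>borel_measurable lebesgue.
        equimeasurable f g \<longrightarrow> \<rho> f = \<rho> g)"

definition ri_norm_of :: "(('a::euclidean_space \<Rightarrow> ennreal) \<Rightarrow> ennreal) \<Rightarrow> ('a \<Rightarrow> complex) \<Rightarrow> ennreal" where
  "ri_norm_of \<rho> f = \<rho> (\<lambda>x. ennreal (cmod (f x)))"

definition in_ri_space :: "(('a::euclidean_space \<Rightarrow> ennreal) \<Rightarrow> ennreal) \<Rightarrow> ('a \<Rightarrow> complex) \<Rightarrow> bool" where
  "in_ri_space \<rho> f \<longleftrightarrow> f \<in> borel_measurable lebesgue \<and> ri_norm_of \<rho> f < \<infinity>"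

end

theory Submission
  imports Defs "HOL-Analysis.Analysis"
begin


lemma lebesgue_affine1:
  fixes t :: "'a::euclidean_space"
  shows "distr lebesgue lebesgue (\<lambda>x. t + x) = lebesgue"
    and "(\<lambda>x. t + x) \<in> lebesgue \<rightarrow>\<^sub>M lebesgue"
proof -
  have eq: "(\<lambda>x. t + (\<Sum>j\<in>Basis. (1 * (x \<bullet> j)) *\<^sub>R j)) = (\<lambda>x::'a. t + x)"
    by (simp add: euclidean_representation)
  show "distr lebesgue lebesgue (\<lambda>x. t + x) = lebesgue"
    using lebesgue_affine_euclidean[of "\<lambda>_. 1" t, unfolded eq] by (simp add: density_1)
  show "(\<lambda>x. t + x) \<in> lebesgue \<rightarrow>\<^sub>M lebesgue"
    using lebesgue_affine_measurable[of "\<lambda>_. 1" t, unfolded eq] by simp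
qed

lemma lebesgue_affine2:
  fixes t :: "'a::euclidean_space"
  shows "distr lebesgue lebesgue (\<lambda>x. t - x) = lebesgue"
    and "(\<lambda>x. t - x) \<in> lebesgue \<rightarrow>\<^sub>M lebesgue"
proof -
  have eq: "(\<lambda>x. t + (\<Sum>j\<in>Basis. (- 1 * (x \<bullet> j)) *\<^sub>R j)) = (\<lambda>x::'a. t - x)"
  proof
    fix x :: 'a
    have "(\<Sum>j\<in>Basis. (- 1 * (x \<bullet> j)) *\<^sub>R j) = - (\<Sum>j\<in>Basis. (x \<bullet> j) *\<^sub>R j)"
      by (simp add: sum_negf[symmetric])
    then show "t + (\<Sum>j\<in>Basis. (- 1 * (x \<bullet> j)) *\<^sub>R j) = t - x"
      by (simp add: euclidean_representation)
  qed
  show "distr lebesgue lebesgue (\<lambda>x. t - x) = lebesgue"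
    using lebesgue_affine_euclidean[of "\<lambda>_. -1" t, unfolded eq] by (simp add: density_1)
  show "(\<lambda>x. t - x) \<in> lebesgue \<rightarrow>\<^sub>M lebesgue"
    using lebesgue_affine_measurable[of "\<lambda>_. -1" t, unfolded eq] by simp
qed

definition invmap :: "('a::euclidean_space \<Rightarrow> 'a) \<Rightarrow> bool" where
  "invmap T \<longleftrightarrow> T \<in> lebesgue \<rightarrow>\<^sub>M lebesgue \<and> distr lebesgue lebesgue T = lebesgue"

lemma invmap_plus: "invmap (\<lambda>x. t + x)" and invmap_minus: "invmap (\<lambda>x. t - x)"
  and invmap_plus': "invmap (\<lambda>x. x + t)" and invmap_minus': "invmap (\<lambda>x. x - t)"
proof -
  show "invmap (\<lambda>x. t + x)" "invmap (\<lambda>x. t - x)"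
    using lebesgue_affine1 lebesgue_affine2 by (auto simp: invmap_def)
  have "(\<lambda>x. x + t) = (\<lambda>x. t + x)" "(\<lambda>x. x - t) = (\<lambda>x. (-t) + x)" by (auto simp: fun_eq_iff)
  then show "invmap (\<lambda>x. x + t)" "invmap (\<lambda>x. x - t)"
    using lebesgue_affine1[of t] lebesgue_affine1[of "-t"] by (auto simp: invmap_def)
qed

lemma invmap_meas: "invmap T \<Longrightarrow> T \<in> lebesgue \<rightarrow>\<^sub>M lebesgue"
  by (simp add: invmap_def)

lemma invmap_comp_meas:
  assumes "invmap T" "h \<in> lebesgue \<rightarrow>\<^sub>M N" shows "(\<lambda>x. h (T x)) \<in> lebesgue \<rightarrow>\<^sub>M N"
  using measurable_comp[OF invmap_meas[OF assms(1)] assms(2)] by (simp add: o_def)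

lemma invmap_nn_integral:
  assumes "invmap T" "h \<in> borel_measurable lebesgue"
  shows "(\<integral>\<^sup>+x. h (T x) \<partial>lebesgue) = (\<integral>\<^sup>+x. h x \<partial>lebesgue)"
proof -
  have "(\<integral>\<^sup>+x. h x \<partial>lebesgue) = (\<integral>\<^sup>+x. h x \<partial>distr lebesgue lebesgue T)"
    using assms(1) by (simp add: invmap_def)
  also have "\<dots> = (\<integral>\<^sup>+x. h (T x) \<partial>lebesgue)"
    using nn_integral_distr[OF invmap_meas[OF assms(1)], of h] assms(2) by simp
  finally show ?thesis by simp
qed

lemma invmap_emeasure:
  assumes "invmap T" "A \<in> sets lebesgue"
  shows "emeasure lebesgue (T -` A) = emeasure lebesgue A"
proof -
  have "emeasure lebesgue A = emeasure (distr lebesgue lebesgue T) A"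
    using assms(1) by (simp add: invmap_def)
  also have "\<dots> = emeasure lebesgue (T -` A)"
    using emeasure_distr[OF invmap_meas[OF assms(1)] assms(2)] by simp
  finally show ?thesis by simp
qed

lemma invmap_AE:
  assumes "invmap T" "AE x in lebesgue. P x"
  shows "AE x in lebesgue. P (T x)"
proof -
  from assms(2) obtain N where N: "{x. \<not> P x} \<subseteq> N" "emeasure lebesgue N = 0" "N \<in> sets lebesgue"
    by (auto elim!: AE_E)
  have "T -` N \<in> sets lebesgue"
    using measurable_sets[OF invmap_meas[OF assms(1)] N(3)] by simp
  moreover have "emeasure lebesgue (T -` N) = 0"
    using invmap_emeasure[OF assms(1) N(3)] N(2) by simp
  ultimately show ?thesis
    using N(1) by (intro AE_I'[of "T -` N"]) auto
qed




context
  fixes \<rho> :: "('a::euclidean_space \<Rightarrow> ennreal) \<Rightarrow> ennreal"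
  assumes R: "ri_norm \<rho>"
begin

lemma rho_zero_iff: "f \<in> borel_measurable lebesgue \<Longrightarrow> \<rho> f = 0 \<longleftrightarrow> (AE x in lebesgue. f x = 0)"
  using R unfolding ri_norm_def by blast

lemma rho_zero: "\<rho> (\<lambda>x. 0) = 0"
  using rho_zero_iff[of "\<lambda>x. 0"] by simp

lemma rho_hom: "f \<in> borel_measurable lebesgue \<Longrightarrow> a \<ge> 0 \<Longrightarrow> \<rho> (\<lambda>x. ennreal a * f x) = ennreal a * \<rho> f"
  using R unfolding ri_norm_def by blast

lemma rho_add: "f \<in> borel_measurable lebesgue \<Longrightarrow> g \<in> borel_measurable lebesgue \<Longrightarrow> \<rho> (\<lambda>x. f x + g x) \<le> \<rho> f + \<rho> g"
  using R unfolding ri_norm_def by blast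

lemma rho_mono: "f \<in> borel_measurable lebesgue \<Longrightarrow> g \<in> borel_measurable lebesgue \<Longrightarrow>
   (AE x in lebesgue. g x \<le> f x) \<Longrightarrow> \<rho> g \<le> \<rho> f"
  using R unfolding ri_norm_def by blast

lemma rho_cong: "f \<in> borel_measurable lebesgue \<Longrightarrow> g \<in> borel_measurable lebesgue \<Longrightarrow>
   (AE x in lebesgue. g x = f x) \<Longrightarrow> \<rho> g = \<rho> f"
  by (rule antisym; rule rho_mono; auto elim!: eventually_mono)

lemma rho_sup: "(\<And>k. F k \<in> borel_measurable lebesgue) \<Longrightarrow> f \<in> borel_measurable lebesgue \<Longrightarrow>
        (AE x in lebesgue. incseq (\<lambda>k. F k x) \<and> f x = (SUP k. F k x)) \<Longrightarrow>
        \<rho> f = (SUP k. \<rho> (F k))"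
  using R unfolding ri_norm_def by blast

lemma rho_ind_finite: "E \<in> sets lebesgue \<Longrightarrow> emeasure lebesgue E < \<infinity> \<Longrightarrow> \<rho> (indicator E) < \<infinity>"
  using R unfolding ri_norm_def by blast

lemma rho_int: "E \<in> sets lebesgue \<Longrightarrow> emeasure lebesgue E < \<infinity> \<Longrightarrow>
        (\<exists>C::real. \<forall>f\<in>borel_measurable lebesgue.
            (\<integral>\<^sup>+ x\<in>E. f x \<partial>lebesgue) \<le> ennreal C * \<rho> f)"
  using R unfolding ri_norm_def by blast

lemma rho_equi: "f \<in> borel_measurable lebesgue \<Longrightarrow> g \<in> borel_measurable lebesgue \<Longrightarrow>
        equimeasurable f g \<Longrightarrow> \<rho> f = \<rho> g"
  using R unfolding ri_norm_def by blast

lemma rho_invmap: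
  assumes T: "invmap T" and h: "h \<in> borel_measurable lebesgue"
  shows "\<rho> (\<lambda>x. h (T x)) = \<rho> h"
proof (rule rho_equi)
  show hT: "(\<lambda>x. h (T x)) \<in> borel_measurable lebesgue"
    by (rule invmap_comp_meas[OF T h])
  show "h \<in> borel_measurable lebesgue" by (rule h)
  show "equimeasurable (\<lambda>x. h (T x)) h"
    unfolding equimeasurable_def
  proof
    fix t :: ennreal
    have "{x\<in>space lebesgue. t < h x} \<in> sets lebesgue"
      using h by measurable
    then have s: "{x. t < h x} \<in> sets lebesgue" by simp
    have "{x. t < h (T x)} = T -` {x. t < h x}" by auto
    then show "emeasure lebesgue {x. t < h (T x)} = emeasure lebesgue {x. t < h x}"
      using invmap_emeasure[OF T s] by simp
  qed
qed

lemma rho_sum: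
  assumes "finite I" "\<And>i. i \<in> I \<Longrightarrow> h i \<in> borel_measurable lebesgue" "\<And>i. i \<in> I \<Longrightarrow> c i \<ge> 0"
  shows "\<rho> (\<lambda>x. \<Sum>i\<in>I. ennreal (c i) * h i x) \<le> (\<Sum>i\<in>I. ennreal (c i) * \<rho> (h i))"
  using assms
proof (induction I rule: finite_induct)
  case empty
  then show ?case by (simp add: rho_zero)
next
  case (insert a I)
  have m1: "(\<lambda>x. ennreal (c a) * h a x) \<in> borel_measurable lebesgue"
    using insert.prems by auto
  have m2: "(\<lambda>x. \<Sum>i\<in>I. ennreal (c i) * h i x) \<in> borel_measurable lebesgue"
    using insert.prems by (intro borel_measurable_sum) auto
  have "\<rho> (\<lambda>x. \<Sum>i\<in>insert a I. ennreal (c i) * h i x)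
      = \<rho> (\<lambda>x. ennreal (c a) * h a x + (\<Sum>i\<in>I. ennreal (c i) * h i x))"
    using insert.hyps by simp
  also have "\<dots> \<le> \<rho> (\<lambda>x. ennreal (c a) * h a x) + \<rho> (\<lambda>x. \<Sum>i\<in>I. ennreal (c i) * h i x)"
    by (rule rho_add[OF m1 m2])
  also have "\<dots> \<le> ennreal (c a) * \<rho> (h a) + (\<Sum>i\<in>I. ennreal (c i) * \<rho> (h i))"
    using insert by (intro add_mono) (auto simp: rho_hom)
  finally show ?case using insert.hyps by simp
qed

lemma rho_liminf:
  assumes phi: "\<And>k. \<phi> k \<in> borel_measurable lebesgue" and G: "G \<in> borel_measurable lebesgue"
    and bd: "\<And>k. \<rho> (\<phi> k) \<le> M"
    and le: "AE x in lebesgue. G x \<le> liminf (\<lambda>k. \<phi> k x)"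
  shows "\<rho> G \<le> M"
proof -
  define \<Phi> where "\<Phi> k x = (INF j\<in>{k..}. \<phi> j x)" for k x
  have mP: "\<Phi> k \<in> borel_measurable lebesgue" for k
    unfolding \<Phi>_def using phi by measurable
  have inc: "incseq (\<lambda>k. \<Phi> k x)" for x
    unfolding \<Phi>_def by (intro monoI INF_mono) (auto intro: bexI[of _ "_"])
  have lim: "liminf (\<lambda>k. \<phi> k x) = (SUP k. \<Phi> k x)" for x
    unfolding \<Phi>_def liminf_SUP_INF by simp
  have mS: "(\<lambda>x. SUP k. \<Phi> k x) \<in> borel_measurable lebesgue"
    using mP by measurable
  have "\<rho> (\<lambda>x. SUP k. \<Phi> k x) = (SUP k. \<rho> (\<Phi> k))"
    using inc by (intro rho_sup[OF mP mS]) auto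
  also have "\<dots> \<le> M"
  proof (rule SUP_least)
    fix k
    have "\<rho> (\<Phi> k) \<le> \<rho> (\<phi> k)"
      using mP phi by (intro rho_mono) (auto simp: \<Phi>_def intro: INF_lower)
    then show "\<rho> (\<Phi> k) \<le> M" using bd order_trans by blast
  qed
  finally have "\<rho> (\<lambda>x. SUP k. \<Phi> k x) \<le> M" .
  moreover have "\<rho> G \<le> \<rho> (\<lambda>x. SUP k. \<Phi> k x)"
    using le by (intro rho_mono[OF mS G]) (auto simp: lim)
  ultimately show ?thesis by simp
qed

end



lemma intS:
  fixes f :: "'a::euclidean_space \<Rightarrow> real"
  assumes "S \<in> sets lborel" "emeasure lborel S < \<infinity>" "f \<in> borel_measurable lborel" "\<And>x. \<bar>f x\<bar> \<le> B"
  shows "integrable lborel (\<lambda>x. indicator S x * f x)"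
  using assms by (intro integrableI_bounded_set[where A=S and B=B]) (auto split: split_indicator)

lemma sq_tendsto_zero:
  fixes w :: "nat \<Rightarrow> real"
  assumes "(\<lambda>n. (w n)^2) \<longlonglongrightarrow> 0" shows "w \<longlonglongrightarrow> 0"
proof -
  have "(\<lambda>n. sqrt ((w n)^2)) \<longlonglongrightarrow> sqrt 0"
    by (intro tendsto_real_sqrt assms)
  then have "(\<lambda>n. \<bar>w n\<bar>) \<longlonglongrightarrow> 0" by simp
  then show ?thesis by (simp add: tendsto_rabs_zero_iff)
qed

lemma maurey:
  fixes g :: "'a::euclidean_space \<Rightarrow> 'a \<Rightarrow> real" and \<alpha> :: "'a \<Rightarrow> real"
  assumes gm: "(\<lambda>p. g (snd p) (fst p)) \<in> borel_measurable (lborel \<Otimes>\<^sub>M lborel)"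
    and g0: "\<And>y x. 0 \<le> g y x" and gT: "\<And>y x. g y x \<le> T"
    and \<alpha>m: "\<alpha> \<in> borel_measurable lborel" and \<alpha>0: "\<And>y. 0 \<le> \<alpha> y"
    and \<alpha>i: "integrable lborel \<alpha>" and \<alpha>1: "integral\<^sup>L lborel \<alpha> = 1"
    and Sm: "S \<in> sets lborel" and Sf: "emeasure lborel S < \<infinity>"
  shows "\<exists>Y r. strict_mono r \<and> (AE x in lborel. x \<in> S \<longrightarrow>
     (\<lambda>k. (\<Sum>i<Suc (r k). g (Y i) x) / real (Suc (r k))) \<longlonglongrightarrow> (\<integral>y. g y x * \<alpha> y \<partial>lborel))"
proof -
  define G where "G x = (\<integral>y. g y x * \<alpha> y \<partial>lborel)" for x
  have T0: "0 \<le> T" using g0 gT order_trans by blast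
  have gxm: "(\<lambda>y. g y x) \<in> borel_measurable lborel" for x
    using measurable_Pair2[OF gm, of x] by simp
  have gym: "g y \<in> borel_measurable lborel" for y
    using measurable_Pair1[OF gm, of y] by simp
  have gam: "(\<lambda>p. g (snd p) (fst p) * \<alpha> (snd p)) \<in> borel_measurable (lborel \<Otimes>\<^sub>M lborel)"
    using gm \<alpha>m by measurable
  have Gm: "G \<in> borel_measurable lborel"
  proof -
    have "case_prod (\<lambda>x y. g y x * \<alpha> y) \<in> borel_measurable (lborel \<Otimes>\<^sub>M lborel)"
      using gam by (simp add: case_prod_beta')
    then show ?thesis unfolding G_def by (rule lborel.borel_measurable_lebesgue_integral)
  qed
  have gai: "integrable lborel (\<lambda>y. g y x * \<alpha> y)" for x
  proof (rule Bochner_Integration.integrable_bound[where f="\<lambda>y. T * \<alpha> y"])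
    show "integrable lborel (\<lambda>y. T * \<alpha> y)" using \<alpha>i by simp
    show "(\<lambda>y. g y x * \<alpha> y) \<in> borel_measurable lborel" using gxm \<alpha>m by measurable
    show "AE y in lborel. norm (g y x * \<alpha> y) \<le> norm (T * \<alpha> y)"
      using g0 gT \<alpha>0 T0 by (auto simp: abs_mult intro!: mult_right_mono)
  qed
  have G0: "0 \<le> G x" for x
    unfolding G_def using g0 \<alpha>0 by (auto intro!: integral_nonneg_AE)
  have GT: "G x \<le> T" for x
  proof -
    have "G x \<le> (\<integral>y. T * \<alpha> y \<partial>lborel)"
      unfolding G_def using gai \<alpha>i gT \<alpha>0 by (intro integral_mono) (auto intro!: mult_right_mono)
    also have "\<dots> = T" using \<alpha>1 by simp
    finally show ?thesis .
  qed
  define ip where "ip a b = (\<integral>x. indicator S x * a x * b x \<partial>lborel)" for a b :: "'a \<Rightarrow> real"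
  have ex: "\<exists>y. ip a (\<lambda>x. g y x - G x) \<le> 0"
    if am: "a \<in> borel_measurable lborel" and ab: "\<And>x. \<bar>a x\<bar> \<le> B" for a B
  proof (rule ccontr)
    assume "\<not> ?thesis"
    then have pos: "0 < ip a (\<lambda>x. g y x - G x)" for y using not_le by blast
    have B0: "0 \<le> B" using ab[of 0] by simp
    define F where "F x y = indicator S x * a x * (g y x - G x) * \<alpha> y" for x y
    have Fm: "case_prod F \<in> borel_measurable (lborel \<Otimes>\<^sub>M lborel)"
    proof -
      have "(\<lambda>p. indicator S (fst p) * a (fst p) * (g (snd p) (fst p) - G (fst p)) * \<alpha> (snd p))
          \<in> borel_measurable (lborel \<Otimes>\<^sub>M lborel)"
        using gm \<alpha>m am Gm Sm by measurable
      then show ?thesis by (simp add: F_def case_prod_beta')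
    qed
    define D where "D p = indicator S (fst p) * (B * T) * \<alpha> (snd p)" for p :: "'a \<times> 'a"
    have Dm: "D \<in> borel_measurable (lborel \<Otimes>\<^sub>M lborel)"
      unfolding D_def using \<alpha>m Sm by measurable
    have Di: "integrable (lborel \<Otimes>\<^sub>M lborel) D"
    proof (rule integrableI_nonneg[OF Dm])
      show "AE x in lborel \<Otimes>\<^sub>M lborel. 0 \<le> D x"
        using B0 T0 \<alpha>0 by (auto simp: D_def)
      have "integral\<^sup>N (lborel \<Otimes>\<^sub>M lborel) (\<lambda>p. ennreal (D p))
          = (\<integral>\<^sup>+x. \<integral>\<^sup>+y. ennreal (D (x, y)) \<partial>lborel \<partial>lborel)"
        using lborel.nn_integral_fst[of "\<lambda>p. ennreal (D p)" lborel] Dm by simp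
      also have "\<dots> = (\<integral>\<^sup>+x. ennreal (indicator S x * (B * T)) * (\<integral>\<^sup>+y. ennreal (\<alpha> y) \<partial>lborel) \<partial>lborel)"
        unfolding D_def using B0 T0 \<alpha>0 \<alpha>m
        by (intro nn_integral_cong) (simp add: ennreal_mult nn_integral_cmult[symmetric] mult_ac)
      also have "(\<integral>\<^sup>+y. ennreal (\<alpha> y) \<partial>lborel) = 1"
        using nn_integral_eq_integral[OF \<alpha>i] \<alpha>0 \<alpha>1 by simp
      also have "(\<integral>\<^sup>+x. ennreal (indicator S x * (B * T)) * 1 \<partial>lborel) = (\<integral>\<^sup>+x. ennreal (B * T) * indicator S x \<partial>lborel)"
        by (intro nn_integral_cong) (auto split: split_indicator)
      also have "\<dots> = ennreal (B * T) * emeasure lborel S"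
        using Sm by (rule nn_integral_cmult_indicator)
      also have "\<dots> < \<infinity>" using Sf by (simp add: ennreal_mult_less_top)
      finally show "integral\<^sup>N (lborel \<Otimes>\<^sub>M lborel) (\<lambda>p. ennreal (D p)) < \<infinity>" .
    qed
    have Fi: "integrable (lborel \<Otimes>\<^sub>M lborel) (case_prod F)"
    proof (rule Bochner_Integration.integrable_bound[OF Di Fm], rule AE_I2)
      fix p :: "'a \<times> 'a"
      obtain x y where p: "p = (x, y)" by (cases p)
      have "\<bar>g y x - G x\<bar> \<le> T" using g0[of y x] gT[of y x] G0[of x] GT[of x] by (auto simp: abs_le_iff)
      then have "\<bar>a x\<bar> * \<bar>g y x - G x\<bar> \<le> B * T"
        using ab[of x] B0 by (intro mult_mono) auto
      then have "indicator S x * (\<bar>a x\<bar> * \<bar>g y x - G x\<bar>) * \<alpha> y \<le> indicator S x * (B * T) * \<alpha> y"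
        using \<alpha>0[of y] by (intro mult_right_mono) (auto split: split_indicator)
      then show "norm (case_prod F p) \<le> norm (D p)"
        using \<alpha>0[of y] B0 T0 by (simp add: p F_def D_def abs_mult split: split_indicator)
    qed
    have inner_x: "(\<integral>x. F x y \<partial>lborel) = \<alpha> y * ip a (\<lambda>x. g y x - G x)" for y
      unfolding ip_def F_def by (simp add: mult_ac)
    have inner_y: "(\<integral>y. F x y \<partial>lborel) = 0" for x
    proof -
      have "(\<integral>y. F x y \<partial>lborel) = (\<integral>y. (indicator S x * a x) * ((g y x - G x) * \<alpha> y) \<partial>lborel)"
        unfolding F_def by (simp add: mult_ac)
      also have "\<dots> = indicator S x * a x * (\<integral>y. (g y x - G x) * \<alpha> y \<partial>lborel)"
        by (rule integral_mult_right_zero)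
      also have "(\<integral>y. (g y x - G x) * \<alpha> y \<partial>lborel) = (\<integral>y. g y x * \<alpha> y - G x * \<alpha> y \<partial>lborel)"
        by (simp add: algebra_simps)
      also have "\<dots> = G x - G x * 1"
        using gai \<alpha>i \<alpha>1 by (simp add: G_def)
      finally show ?thesis by simp
    qed
    have "(\<integral>y. (\<integral>x. F x y \<partial>lborel) \<partial>lborel) = (\<integral>x. (\<integral>y. F x y \<partial>lborel) \<partial>lborel)"
      by (rule lborel_pair.Fubini_integral[OF Fi])
    then have int0: "(\<integral>y. \<alpha> y * ip a (\<lambda>x. g y x - G x) \<partial>lborel) = 0"
      by (simp add: inner_x inner_y)
    have inti: "integrable lborel (\<lambda>y. \<alpha> y * ip a (\<lambda>x. g y x - G x))"
      using lborel_pair.integrable_snd[OF Fi] by (simp add: inner_x)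
    have "AE y in lborel. \<alpha> y * ip a (\<lambda>x. g y x - G x) = 0"
      using integral_nonneg_eq_0_iff_AE[OF inti] int0 pos \<alpha>0
      by (simp add: less_imp_le)
    then have "AE y in lborel. \<alpha> y = 0"
      using pos by (auto elim!: eventually_mono simp: less_imp_neq[symmetric])
    then have "integral\<^sup>L lborel \<alpha> = integral\<^sup>L lborel (\<lambda>y. 0)"
      using integral_cong_AE[OF \<alpha>m, of "\<lambda>y. 0"] by simp
    then show False using \<alpha>1 by simp
  qed

  define sel where "sel k \<psi> = (SOME y. ip (\<lambda>x. \<psi> x - real k * G x) (\<lambda>x. g y x - G x) \<le> 0)"
    for k :: nat and \<psi> :: "'a \<Rightarrow> real"
  define \<Psi> where "\<Psi> = rec_nat (\<lambda>x. 0) (\<lambda>k \<psi>. \<lambda>x. \<psi> x + g (sel k \<psi>) x)"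
  define Y where "Y k = sel k (\<Psi> k)" for k
  have \<Psi>0: "\<Psi> 0 = (\<lambda>x. 0)" by (simp add: \<Psi>_def)
  have \<Psi>S: "\<Psi> (Suc k) = (\<lambda>x. \<Psi> k x + g (Y k) x)" for k by (simp add: \<Psi>_def Y_def)
  have \<Psi>sum: "\<Psi> k x = (\<Sum>i<k. g (Y i) x)" for k x
    by (induction k) (simp_all add: \<Psi>0 \<Psi>S)
  have \<Psi>m: "\<Psi> k \<in> borel_measurable lborel" for k
  proof -
    have "(\<lambda>x. \<Sum>i<k. g (Y i) x) \<in> borel_measurable lborel"
      using gym by (intro borel_measurable_sum) auto
    then show ?thesis by (simp add: \<Psi>sum[abs_def])
  qed
  have \<Psi>b: "0 \<le> \<Psi> k x \<and> \<Psi> k x \<le> real k * T" for k x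
  proof (induction k)
    case 0 then show ?case by (simp add: \<Psi>0)
  next
    case (Suc k) then show ?case using g0[of "Y k" x] gT[of "Y k" x] by (simp add: \<Psi>S algebra_simps)
  qed
  define A where "A k x = \<Psi> k x - real k * G x" for k x
  have Am: "A k \<in> borel_measurable lborel" for k
    unfolding A_def using \<Psi>m Gm by measurable
  have Ab: "\<bar>A k x\<bar> \<le> real k * T" for k x
  proof -
    have "0 \<le> real k * G x" using G0[of x] by simp
    moreover have "real k * G x \<le> real k * T" using GT[of x] by (simp add: mult_left_mono)
    ultimately show ?thesis using \<Psi>b[of k x] unfolding A_def abs_le_iff by linarith
  qed
  have selp: "ip (A k) (\<lambda>x. g (Y k) x - G x) \<le> 0" for k
  proof -
    have "\<exists>y. ip (\<lambda>x. \<Psi> k x - real k * G x) (\<lambda>x. g y x - G x) \<le> 0"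
      using ex[OF Am Ab] by (simp add: A_def[abs_def])
    then have "ip (\<lambda>x. \<Psi> k x - real k * G x) (\<lambda>x. g (sel k (\<Psi> k)) x - G x) \<le> 0"
      unfolding sel_def by (rule someI_ex)
    then show ?thesis by (simp add: A_def[abs_def] Y_def)
  qed
  define mS where "mS = measure lborel S"
  define E where "E k = ip (A k) (A k)" for k
  have bm: "(\<lambda>x. g (Y k) x - G x) \<in> borel_measurable lborel" for k
    using gym Gm by measurable
  have bb: "\<bar>g (Y k) x - G x\<bar> \<le> T" for k x
    using g0[of "Y k" x] gT[of "Y k" x] G0[of x] GT[of x] by (auto simp: abs_le_iff)
  have prodint: "integrable lborel (\<lambda>x. indicator S x * a x * b x)"
    if "a \<in> borel_measurable lborel" "b \<in> borel_measurable lborel" "\<And>x. \<bar>a x\<bar> \<le> Ba" "\<And>x. \<bar>b x\<bar> \<le> Bb"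
    for a b :: "'a \<Rightarrow> real" and Ba Bb :: real
  proof -
    have "integrable lborel (\<lambda>x. indicator S x * (a x * b x))"
    proof (rule intS[OF Sm Sf])
      show "(\<lambda>x. a x * b x) \<in> borel_measurable lborel" using that by measurable
      show "\<bar>a x * b x\<bar> \<le> Ba * Bb" for x
        using that(3)[of x] that(4)[of x] by (simp add: abs_mult mult_mono)
    qed
    then show ?thesis by (simp add: mult.assoc)
  qed
  have ESuc: "E (Suc k) \<le> E k + T^2 * mS" for k
  proof -
    define b where "b x = g (Y k) x - G x" for x
    have ASuc: "A (Suc k) x = A k x + b x" for x
      by (simp add: A_def b_def \<Psi>S algebra_simps)
    have i1: "integrable lborel (\<lambda>x. indicator S x * A k x * A k x)"
      by (rule prodint[OF Am Am Ab Ab])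
    have i2: "integrable lborel (\<lambda>x. indicator S x * A k x * b x)"
      by (rule prodint[OF Am bm[of k, folded b_def] Ab bb[of k, folded b_def]])
    have i3: "integrable lborel (\<lambda>x. indicator S x * b x * b x)"
      by (rule prodint[OF bm[of k, folded b_def] bm[of k, folded b_def] bb[of k, folded b_def] bb[of k, folded b_def]])
    have "E (Suc k) = (\<integral>x. indicator S x * A k x * A k x + 2 * (indicator S x * A k x * b x) + indicator S x * b x * b x \<partial>lborel)"
      unfolding E_def ip_def ASuc by (intro Bochner_Integration.integral_cong) (auto simp: algebra_simps)
    also have "\<dots> = E k + 2 * ip (A k) b + ip b b"
      using i1 i2 i3 by (simp add: E_def ip_def)
    also have "ip (A k) b \<le> 0" using selp[of k] by (simp add: b_def[abs_def])
    also have "ip b b \<le> (\<integral>x. T^2 * indicator S x \<partial>lborel)"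
      unfolding ip_def
    proof (rule Bochner_Integration.integral_mono[OF i3])
      show "integrable lborel (\<lambda>x. T^2 * indicator S x)"
        using Sm Sf by (intro integrable_mult_right integrable_real_indicator) auto
      show "indicator S x * b x * b x \<le> T^2 * indicator S x" for x
        using bb[of k x, folded b_def] abs_le_square_iff[of "b x" T] T0
        by (auto simp: power2_eq_square split: split_indicator)
    qed
    also have "(\<integral>x. T^2 * indicator S x \<partial>lborel) = T^2 * mS"
      using Sm Sf by (simp add: mS_def)
    finally show ?thesis by simp
  qed
  have Ebd: "E k \<le> real k * (T^2 * mS)" for k
  proof (induction k)
    case 0 then show ?case by (simp add: E_def ip_def A_def \<Psi>0)
  next
    case (Suc k) then show ?case using ESuc[of k] by (simp add: algebra_simps)
  qed
  define u where "u k x = indicator S x * (\<Psi> (Suc k) x / real (Suc k) - G x)^2" for k x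
  have u_eq: "u k x = indicator S x * A (Suc k) x * A (Suc k) x / (real (Suc k))^2" for k x
    unfolding u_def A_def by (simp add: field_simps power2_eq_square)
  have ui: "integrable lborel (u k)" for k
  proof -
    have "integrable lborel (\<lambda>x. indicator S x * A (Suc k) x * A (Suc k) x / (real (Suc k))^2)"
      using prodint[OF Am Am Ab Ab] by simp
    then show ?thesis by (simp add: u_eq[abs_def])
  qed
  have u0: "0 \<le> u k x" for k x by (simp add: u_def)
  have uint: "(\<integral>x. u k x \<partial>lborel) = E (Suc k) / (real (Suc k))^2" for k
    by (simp add: u_eq E_def ip_def)
  have "(\<lambda>k. (\<integral>x. norm (u k x) \<partial>lborel)) \<longlonglongrightarrow> 0"
  proof (rule tendsto_sandwich[of "\<lambda>k. 0" _ sequentially "\<lambda>k. (T^2 * mS) / real (Suc k)"])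
    show "\<forall>\<^sub>F k in sequentially. 0 \<le> (\<integral>x. norm (u k x) \<partial>lborel)"
      by (auto intro!: integral_nonneg_AE)
    show "\<forall>\<^sub>F k in sequentially. (\<integral>x. norm (u k x) \<partial>lborel) \<le> (T^2 * mS) / real (Suc k)"
    proof (intro always_eventually allI)
      fix k
      have "(\<integral>x. norm (u k x) \<partial>lborel) = E (Suc k) / (real (Suc k))^2"
        using u0 uint by simp
      also have "\<dots> \<le> (real (Suc k) * (T^2 * mS)) / (real (Suc k))^2"
        using Ebd[of "Suc k"] by (intro divide_right_mono) auto
      also have "\<dots> = (T^2 * mS) / real (Suc k)"
        by (simp add: power2_eq_square)
      finally show "(\<integral>x. norm (u k x) \<partial>lborel) \<le> (T^2 * mS) / real (Suc k)" .
    qed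
    show "(\<lambda>k. 0) \<longlonglongrightarrow> (0::real)" by simp
    show "(\<lambda>k. (T^2 * mS) / real (Suc k)) \<longlonglongrightarrow> 0"
      using tendsto_mult_right_zero[OF LIMSEQ_inverse_real_of_nat, of "T^2 * mS"] by (simp add: divide_inverse)
  qed
  from tendsto_L1_AE_subseq[OF ui this]
  obtain r where r: "strict_mono r" "AE x in lborel. (\<lambda>n. u (r n) x) \<longlonglongrightarrow> 0" by blast
  have "AE x in lborel. x \<in> S \<longrightarrow> (\<lambda>k. (\<Sum>i<Suc (r k). g (Y i) x) / real (Suc (r k))) \<longlonglongrightarrow> G x"
    using r(2)
  proof (rule eventually_mono, intro impI)
    fix x assume lim: "(\<lambda>n. u (r n) x) \<longlonglongrightarrow> 0" and xS: "x \<in> S"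
    then have "(\<lambda>n. (\<Psi> (Suc (r n)) x / real (Suc (r n)) - G x)^2) \<longlonglongrightarrow> 0"
      by (simp add: u_def)
    then have "(\<lambda>n. \<Psi> (Suc (r n)) x / real (Suc (r n)) - G x) \<longlonglongrightarrow> 0"
      by (rule sq_tendsto_zero)
    then have "(\<lambda>n. \<Psi> (Suc (r n)) x / real (Suc (r n))) \<longlonglongrightarrow> G x"
      by (rule LIM_zero_cancel)
    then show "(\<lambda>k. (\<Sum>i<Suc (r k). g (Y i) x) / real (Suc (r k))) \<longlonglongrightarrow> G x"
      by (simp add: \<Psi>sum)
  qed
  then show ?thesis using r(1) unfolding G_def by blast
qed




lemma borel_rep:
  fixes v :: "'a::euclidean_space \<Rightarrow> real"
  assumes "v \<in> borel_measurable lebesgue" "\<And>x. 0 \<le> v x"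
  shows "\<exists>v'. v' \<in> borel_measurable lborel \<and> (\<forall>x. 0 \<le> v' x) \<and> (AE x in lebesgue. v x = v' x)"
proof -
  obtain g where g: "g \<in> borel_measurable lborel" "AE x in lborel. v x = g x"
    using completion_ex_borel_measurable_real[OF assms(1)] by blast
  define v' where "v' x = max 0 (g x)" for x
  have "v' \<in> borel_measurable lborel" unfolding v'_def using g(1) by measurable
  moreover have "AE x in lborel. v x = v' x"
    using g(2)
  proof (rule eventually_mono)
    fix x assume "v x = g x" then show "v x = v' x" using assms(2)[of x] by (simp add: v'_def)
  qed
  ultimately show ?thesis
    by (intro exI[of _ v']) (auto simp: v'_def intro: AE_completion)
qed

lemma conv_borel:
  fixes v \<alpha> v' \<alpha>' :: "'a::euclidean_space \<Rightarrow> real"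
  assumes "AE x in lebesgue. v x = v' x" "AE x in lebesgue. \<alpha> x = \<alpha>' x"
    and "v' \<in> borel_measurable lborel" "\<alpha>' \<in> borel_measurable lborel"
  shows "conv v \<alpha> x = (\<integral>\<^sup>+y. ennreal (v' (x - y) * \<alpha>' y) \<partial>lborel)"
proof -
  have "AE y in lebesgue. v (x - y) = v' (x - y)"
    using invmap_AE[OF invmap_minus[of x] assms(1)] .
  then have "conv v \<alpha> x = (\<integral>\<^sup>+y. ennreal (v' (x - y) * \<alpha>' y) \<partial>lebesgue)"
    unfolding conv_def
  proof (intro nn_integral_cong_AE)
    show "AE y in lebesgue. ennreal (v (x - y) * \<alpha> y) = ennreal (v' (x - y) * \<alpha>' y)"
      using \<open>AE y in lebesgue. v (x - y) = v' (x - y)\<close> assms(2)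
    proof (rule eventually_elim2)
      fix y assume "v (x - y) = v' (x - y)" "\<alpha> y = \<alpha>' y"
      then show "ennreal (v (x - y) * \<alpha> y) = ennreal (v' (x - y) * \<alpha>' y)" by simp
    qed
  qed
  then show ?thesis by (simp add: nn_integral_completion)
qed

lemma conv_borel_meas:
  fixes v' \<alpha>' :: "'a::euclidean_space \<Rightarrow> real"
  assumes [measurable]: "v' \<in> borel_measurable lborel" "\<alpha>' \<in> borel_measurable lborel"
  shows "(\<lambda>x. \<integral>\<^sup>+y. ennreal (v' (x - y) * \<alpha>' y) \<partial>lborel) \<in> borel_measurable lborel"
proof -
  have "case_prod (\<lambda>x y. ennreal (v' (x - y) * \<alpha>' y)) \<in> borel_measurable (lborel \<Otimes>\<^sub>M lborel)"
    by (simp add: case_prod_beta') measurable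
  then show ?thesis by (rule lborel.borel_measurable_nn_integral)
qed

lemma SUP_min_nat:
  fixes a b :: real
  assumes "0 \<le> a" "0 \<le> b"
  shows "(SUP T::nat. ennreal (min a (real T) * b)) = ennreal (a * b)"
proof (rule antisym)
  show "(SUP T::nat. ennreal (min a (real T) * b)) \<le> ennreal (a * b)"
    using assms by (intro SUP_least ennreal_leI mult_right_mono) auto
  have "a \<le> real (nat \<lceil>a\<rceil>)" by linarith
  then have "ennreal (a * b) = ennreal (min a (real (nat \<lceil>a\<rceil>)) * b)" by simp
  also have "\<dots> \<le> (SUP T::nat. ennreal (min a (real T) * b))" by (rule SUP_upper) simp
  finally show "ennreal (a * b) \<le> (SUP T::nat. ennreal (min a (real T) * b))" .
qed

lemma minkowski:
  fixes \<rho> :: "('a::euclidean_space \<Rightarrow> ennreal) \<Rightarrow> ennreal"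
    and v \<alpha> F :: "'a \<Rightarrow> real"
  assumes R: "ri_norm \<rho>"
    and v'm: "v' \<in> borel_measurable lborel" and v'0: "\<And>x. 0 \<le> v' x"
    and vv': "AE x in lebesgue. v x = v' x" and vm: "v \<in> borel_measurable lebesgue"
    and \<alpha>'m: "\<alpha>' \<in> borel_measurable lborel" and \<alpha>'0: "\<And>x. 0 \<le> \<alpha>' x"
    and \<alpha>'i: "integrable lborel \<alpha>'" and \<alpha>'1: "integral\<^sup>L lborel \<alpha>' = 1"
    and Fm: "F \<in> borel_measurable lebesgue" and F0: "\<And>x. 0 \<le> F x"
    and bd: "\<And>y. \<rho> (\<lambda>x. ennreal (v (x - y) * F x)) \<le> M"
  shows "\<rho> (\<lambda>x. (\<integral>\<^sup>+y. ennreal (v' (x - y) * \<alpha>' y) \<partial>lborel) * ennreal (F x)) \<le> M"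
proof -
  define g where "g T y x = min (v' (x - y)) (real T)" for T :: nat and y x :: 'a
  define G where "G T x = (\<integral>y. g T y x * \<alpha>' y \<partial>lborel)" for T x
  have gm2: "(\<lambda>p. g T (snd p) (fst p)) \<in> borel_measurable (lborel \<Otimes>\<^sub>M lborel)" for T
    unfolding g_def using v'm by measurable
  have gym: "g T y \<in> borel_measurable lborel" for T y
    using measurable_Pair1[OF gm2[of T], of y] by simp
  have gxm: "(\<lambda>y. g T y x) \<in> borel_measurable lborel" for T x
    using measurable_Pair2[OF gm2[of T], of x] by simp
  have g0: "0 \<le> g T y x" for T y x using v'0 by (simp add: g_def)
  have gT: "g T y x \<le> real T" for T y x by (simp add: g_def)
  have Gm: "G T \<in> borel_measurable lborel" for T
  proof -
    have "case_prod (\<lambda>x y. g T y x * \<alpha>' y) \<in> borel_measurable (lborel \<Otimes>\<^sub>M lborel)"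
      unfolding g_def using v'm \<alpha>'m by (simp add: case_prod_beta') measurable
    then show ?thesis unfolding G_def by (rule lborel.borel_measurable_lebesgue_integral)
  qed
  have gai: "integrable lborel (\<lambda>y. g T y x * \<alpha>' y)" for T x
  proof (rule Bochner_Integration.integrable_bound[where f="\<lambda>y. real T * \<alpha>' y"])
    show "integrable lborel (\<lambda>y. real T * \<alpha>' y)" using \<alpha>'i by simp
    show "(\<lambda>y. g T y x * \<alpha>' y) \<in> borel_measurable lborel" using gxm \<alpha>'m by measurable
    show "AE y in lborel. norm (g T y x * \<alpha>' y) \<le> norm (real T * \<alpha>' y)"
      using g0 gT \<alpha>'0 by (auto simp: abs_mult intro!: mult_right_mono)
  qed
  have G0: "0 \<le> G T x" for T x
    unfolding G_def using g0 \<alpha>'0 by (auto intro!: integral_nonneg_AE)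
  have mleb: "f \<in> borel_measurable lebesgue" if "f \<in> borel_measurable lborel" for f :: "'a \<Rightarrow> real"
    using measurable_completion[OF that] .
  note Fm[measurable]
  have Gleb[measurable]: "G T \<in> borel_measurable lebesgue" for T by (rule mleb[OF Gm])
  have ballL[measurable]: "ball c r \<in> sets lebesgue" for c :: 'a and r
    by (intro sets_completionI_sets) simp
  have gbd: "\<rho> (\<lambda>x. ennreal (g T y x * F x)) \<le> M" for T y
  proof -
    have "\<rho> (\<lambda>x. ennreal (g T y x * F x)) \<le> \<rho> (\<lambda>x. ennreal (v (x - y) * F x))"
    proof (rule rho_mono[OF R])
      show "(\<lambda>x. ennreal (v (x - y) * F x)) \<in> borel_measurable lebesgue"
        using invmap_comp_meas[OF invmap_minus'[of y] vm] Fm by measurable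
      show "(\<lambda>x. ennreal (g T y x * F x)) \<in> borel_measurable lebesgue"
        using mleb[OF gym[of T y]] Fm by measurable
      show "AE x in lebesgue. ennreal (g T y x * F x) \<le> ennreal (v (x - y) * F x)"
        using invmap_AE[OF invmap_minus'[of y] vv']
      proof (rule eventually_mono)
        fix x assume "v (x - y) = v' (x - y)"
        then show "ennreal (g T y x * F x) \<le> ennreal (v (x - y) * F x)"
          using F0[of x] by (intro ennreal_leI mult_right_mono) (auto simp: g_def)
      qed
    qed
    then show ?thesis using bd[of y] by (rule order_trans)
  qed
  have stepA: "\<rho> (\<lambda>x. ennreal (indicator (ball 0 (real m)) x * G T x * F x)) \<le> M" for T m
  proof -
    let ?S = "ball (0::'a) (real m)"
    obtain Y r where r: "strict_mono r" and
      conv: "AE x in lborel. x \<in> ?S \<longrightarrow>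
         (\<lambda>k. (\<Sum>i<Suc (r k). g T (Y i) x) / real (Suc (r k))) \<longlonglongrightarrow> G T x"
      using maurey[OF gm2[of T] g0 gT \<alpha>'m \<alpha>'0 \<alpha>'i \<alpha>'1, of ?S] emeasure_lborel_ball_finite
      unfolding G_def by auto
    define \<phi> where "\<phi> k x = (\<Sum>i<Suc (r k). g T (Y i) x) / real (Suc (r k))" for k x
    have \<phi>m: "(\<lambda>x. ennreal (\<phi> k x * F x)) \<in> borel_measurable lebesgue" for k
    proof -
      have "(\<lambda>x. (\<Sum>i<Suc (r k). g T (Y i) x)) \<in> borel_measurable lborel"
        using gym by (intro borel_measurable_sum) auto
      then have "(\<lambda>x. (\<Sum>i<Suc (r k). g T (Y i) x) / real (Suc (r k))) \<in> borel_measurable lborel"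
        by (intro borel_measurable_divide) auto
      then have "\<phi> k \<in> borel_measurable lebesgue"
        unfolding \<phi>_def[abs_def] by (rule mleb)
      then show ?thesis using Fm by measurable
    qed
    have \<phi>bd: "\<rho> (\<lambda>x. ennreal (\<phi> k x * F x)) \<le> M" for k
    proof -
      define N where "N = Suc (r k)"
      have eq: "ennreal (\<phi> k x * F x) = (\<Sum>i<N. ennreal (1 / real N) * ennreal (g T (Y i) x * F x))" for x
      proof -
        have "\<phi> k x * F x = (\<Sum>i<N. (1 / real N) * (g T (Y i) x * F x))"
          unfolding \<phi>_def N_def[symmetric]
          by (simp add: sum_distrib_left sum_distrib_right divide_inverse mult_ac)
        then have "ennreal (\<phi> k x * F x) = (\<Sum>i<N. ennreal ((1 / real N) * (g T (Y i) x * F x)))"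
          using g0 F0 by (simp add: sum_ennreal)
        also have "\<dots> = (\<Sum>i<N. ennreal (1 / real N) * ennreal (g T (Y i) x * F x))"
          by (intro sum.cong refl) (subst ennreal_mult'[symmetric], auto)
        finally show ?thesis .
      qed
      have "\<rho> (\<lambda>x. ennreal (\<phi> k x * F x)) = \<rho> (\<lambda>x. \<Sum>i<N. ennreal (1 / real N) * ennreal (g T (Y i) x * F x))"
        by (simp add: eq)
      also have "\<dots> \<le> (\<Sum>i<N. ennreal (1 / real N) * \<rho> (\<lambda>x. ennreal (g T (Y i) x * F x)))"
        using mleb[OF gym] Fm by (intro rho_sum[OF R]) auto
      also have "\<dots> \<le> (\<Sum>i<N. ennreal (1 / real N) * M)"
        by (intro sum_mono mult_left_mono gbd) auto
      also have "\<dots> = of_nat N * (ennreal (1 / real N) * M)" by simp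
      also have "\<dots> = (ennreal (real N) * ennreal (1 / real N)) * M"
        by (simp add: ennreal_of_nat_eq_real_of_nat mult.assoc)
      also have "ennreal (real N) * ennreal (1 / real N) = ennreal (real N * (1 / real N))"
        by (rule ennreal_mult'[symmetric]) simp
      also have "real N * (1 / real N) = 1" by (simp add: N_def)
      finally show ?thesis by simp
    qed
    show ?thesis
    proof (rule rho_liminf[OF R \<phi>m])
      show "(\<lambda>x. ennreal (indicator ?S x * G T x * F x)) \<in> borel_measurable lebesgue"
        using mleb[OF Gm[of T]] Fm by measurable
      show "\<rho> (\<lambda>x. ennreal (\<phi> k x * F x)) \<le> M" for k by (rule \<phi>bd)
      show "AE x in lebesgue. ennreal (indicator ?S x * G T x * F x) \<le> liminf (\<lambda>k. ennreal (\<phi> k x * F x))"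
        using AE_completion[OF conv]
      proof (rule eventually_mono)
        fix x assume H: "x \<in> ?S \<longrightarrow> (\<lambda>k. (\<Sum>i<Suc (r k). g T (Y i) x) / real (Suc (r k))) \<longlonglongrightarrow> G T x"
        show "ennreal (indicator ?S x * G T x * F x) \<le> liminf (\<lambda>k. ennreal (\<phi> k x * F x))"
        proof (cases "x \<in> ?S")
          case True
          then have "(\<lambda>k. \<phi> k x) \<longlonglongrightarrow> G T x" using H by (simp add: \<phi>_def)
          then have "(\<lambda>k. ennreal (\<phi> k x * F x)) \<longlonglongrightarrow> ennreal (G T x * F x)"
            by (intro tendsto_ennrealI tendsto_mult_right)
          then have "liminf (\<lambda>k. ennreal (\<phi> k x * F x)) = ennreal (G T x * F x)"
            by (simp add: lim_imp_Liminf)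
          then show ?thesis using True by simp
        qed simp
      qed
    qed
  qed
  have stepB: "\<rho> (\<lambda>x. ennreal (G T x * F x)) \<le> M" for T
  proof -
    have "\<rho> (\<lambda>x. ennreal (G T x * F x)) = (SUP m. \<rho> (\<lambda>x. ennreal (indicator (ball 0 (real m)) x * G T x * F x)))"
    proof (rule rho_sup[OF R])
      show "(\<lambda>x. ennreal (indicator (ball 0 (real m)) x * G T x * F x)) \<in> borel_measurable lebesgue" for m
        using mleb[OF Gm[of T]] Fm by measurable
      show "(\<lambda>x. ennreal (G T x * F x)) \<in> borel_measurable lebesgue"
        using mleb[OF Gm[of T]] Fm by measurable
      show "AE x in lebesgue. incseq (\<lambda>m. ennreal (indicator (ball 0 (real m)) x * G T x * F x)) \<and>
          ennreal (G T x * F x) = (SUP m. ennreal (indicator (ball 0 (real m)) x * G T x * F x))"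
      proof (intro AE_I2 conjI)
        fix x :: 'a
        show "incseq (\<lambda>m. ennreal (indicator (ball 0 (real m)) x * G T x * F x))"
          using G0 F0 by (intro monoI ennreal_leI mult_right_mono) (auto split: split_indicator)
        obtain m0 :: nat where m0: "norm x < real m0" using reals_Archimedean2 by blast
        show "ennreal (G T x * F x) = (SUP m. ennreal (indicator (ball 0 (real m)) x * G T x * F x))"
        proof (rule antisym)
          show "ennreal (G T x * F x) \<le> (SUP m. ennreal (indicator (ball 0 (real m)) x * G T x * F x))"
            using m0 by (intro SUP_upper2[of m0]) auto
          show "(SUP m. ennreal (indicator (ball 0 (real m)) x * G T x * F x)) \<le> ennreal (G T x * F x)"
            using G0 F0 by (intro SUP_least ennreal_leI) (auto split: split_indicator)
        qed
      qed
    qed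
    also have "\<dots> \<le> M" by (intro SUP_least stepA)
    finally show ?thesis .
  qed
  have Geq: "ennreal (G T x) = (\<integral>\<^sup>+y. ennreal (g T y x * \<alpha>' y) \<partial>lborel)" for T x
    unfolding G_def using gai g0 \<alpha>'0 by (intro nn_integral_eq_integral[symmetric]) auto
  have convSUP: "(\<integral>\<^sup>+y. ennreal (v' (x - y) * \<alpha>' y) \<partial>lborel) = (SUP T. ennreal (G T x))" for x
  proof -
    have "(\<integral>\<^sup>+y. ennreal (v' (x - y) * \<alpha>' y) \<partial>lborel) = (\<integral>\<^sup>+y. (SUP T. ennreal (g T y x * \<alpha>' y)) \<partial>lborel)"
      unfolding g_def using v'0 \<alpha>'0 by (intro nn_integral_cong) (simp add: SUP_min_nat)
    also have "\<dots> = (SUP T. (\<integral>\<^sup>+y. ennreal (g T y x * \<alpha>' y) \<partial>lborel))"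
    proof (rule nn_integral_monotone_convergence_SUP)
      show "incseq (\<lambda>T y. ennreal (g T y x * \<alpha>' y))"
        using \<alpha>'0 by (intro monoI le_funI ennreal_leI mult_right_mono) (auto simp: g_def)
      show "(\<lambda>y. ennreal (g T y x * \<alpha>' y)) \<in> borel_measurable lborel" for T
        using gxm \<alpha>'m by measurable
    qed
    finally show ?thesis by (simp add: Geq)
  qed
  have "\<rho> (\<lambda>x. (\<integral>\<^sup>+y. ennreal (v' (x - y) * \<alpha>' y) \<partial>lborel) * ennreal (F x)) = (SUP T. \<rho> (\<lambda>x. ennreal (G T x * F x)))"
  proof (rule rho_sup[OF R])
    show "(\<lambda>x. ennreal (G T x * F x)) \<in> borel_measurable lebesgue" for T
      using mleb[OF Gm[of T]] Fm by measurable
    show "(\<lambda>x. (\<integral>\<^sup>+y. ennreal (v' (x - y) * \<alpha>' y) \<partial>lborel) * ennreal (F x)) \<in> borel_measurable lebesgue"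
      using measurable_completion[OF conv_borel_meas[OF v'm \<alpha>'m]] Fm by measurable
    show "AE x in lebesgue. incseq (\<lambda>T. ennreal (G T x * F x)) \<and>
        (\<integral>\<^sup>+y. ennreal (v' (x - y) * \<alpha>' y) \<partial>lborel) * ennreal (F x) = (SUP T. ennreal (G T x * F x))"
    proof (intro AE_I2 conjI)
      fix x :: 'a
      have Gmono: "G T x \<le> G T' x" if "T \<le> T'" for T T'
        unfolding G_def using gai that \<alpha>'0
        by (intro Bochner_Integration.integral_mono mult_right_mono) (auto simp: g_def)
      show "incseq (\<lambda>T. ennreal (G T x * F x))"
        using F0 Gmono by (intro monoI ennreal_leI mult_right_mono) auto
      show "(\<integral>\<^sup>+y. ennreal (v' (x - y) * \<alpha>' y) \<partial>lborel) * ennreal (F x) = (SUP T. ennreal (G T x * F x))"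
        unfolding convSUP SUP_mult_right_ennreal using G0 by (simp add: ennreal_mult')
    qed
  qed
  also have "\<dots> \<le> M" by (intro SUP_least stepB)
  finally show ?thesis .
qed




lemma cis_meas[measurable]: "(\<lambda>t. cis (- (2 * pi * (y \<bullet> t)))) \<in> borel_measurable (borel :: 'a::euclidean_space measure)"
  by (intro borel_measurable_continuous_onI continuous_intros)

lemma cis_meas_leb[measurable]: "(\<lambda>t. cis (- (2 * pi * (y \<bullet> t)))) \<in> borel_measurable (lebesgue :: 'a::euclidean_space measure)"
proof -
  have "(\<lambda>t. cis (- (2 * pi * (y \<bullet> t)))) \<in> borel_measurable (lborel :: 'a measure)"
    using cis_meas[of y] by simp
  then show ?thesis by (rule measurable_completion)
qed

lemma fourier_modulate:
  "fourier (\<lambda>t. cis (- (2 * pi * (y \<bullet> t))) * f t) x = fourier f (x + y)"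
  unfolding fourier_def
proof (intro Bochner_Integration.integral_cong refl)
  fix t
  have "cis (- (2 * pi * (x \<bullet> t))) * cis (- (2 * pi * (y \<bullet> t))) = cis (- (2 * pi * ((x + y) \<bullet> t)))"
    by (simp add: cis_mult inner_add_left algebra_simps)
  then show "cis (- (2 * pi * (x \<bullet> t))) * (cis (- (2 * pi * (y \<bullet> t))) * f t) = cis (- (2 * pi * ((x + y) \<bullet> t))) * f t"
    by (simp add: mult.assoc[symmetric])
qed

lemma modulate_integrable:
  fixes f :: "'a::euclidean_space \<Rightarrow> complex"
  assumes "integrable lebesgue f"
  shows "integrable lebesgue (\<lambda>t. cis (- (2 * pi * (y \<bullet> t))) * f t)"
proof (rule Bochner_Integration.integrable_bound[OF assms])
  show "(\<lambda>t. cis (- (2 * pi * (y \<bullet> t))) * f t) \<in> borel_measurable lebesgue"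
    using borel_measurable_integrable[OF assms] by measurable
  show "AE x in lebesgue. norm (cis (- (2 * pi * (y \<bullet> x))) * f x) \<le> norm (f x)"
    by (simp add: norm_mult)
qed

lemma fourier_meas:
  fixes f :: "'a::euclidean_space \<Rightarrow> complex"
  assumes "integrable lebesgue f"
  shows "fourier f \<in> borel_measurable lebesgue"
proof -
  have fm: "f \<in> borel_measurable lebesgue" using assms by (rule borel_measurable_integrable)
  obtain r1 where r1: "r1 \<in> borel_measurable lborel" "AE x in lborel. Re (f x) = r1 x"
    using completion_ex_borel_measurable_real[of "\<lambda>x. Re (f x)" lborel] fm by auto
  obtain r2 where r2: "r2 \<in> borel_measurable lborel" "AE x in lborel. Im (f x) = r2 x"
    using completion_ex_borel_measurable_real[of "\<lambda>x. Im (f x)" lborel] fm by auto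
  define f' where "f' x = complex_of_real (r1 x) + \<i> * complex_of_real (r2 x)" for x
  have f'm: "f' \<in> borel_measurable lborel"
    unfolding f'_def using r1(1) r2(1) by measurable
  have ae: "AE x in lebesgue. f x = f' x"
    using AE_completion[OF r1(2)] AE_completion[OF r2(2)]
    by eventually_elim (simp add: f'_def complex_eq_iff)
  have eq: "fourier f x = (\<integral>t. cis (- (2 * pi * (x \<bullet> t))) * f' t \<partial>lborel)" for x
  proof -
    have "fourier f x = (\<integral>t. cis (- (2 * pi * (x \<bullet> t))) * f' t \<partial>lebesgue)"
      unfolding fourier_def
    proof (rule integral_cong_AE)
      show "(\<lambda>t. cis (- (2 * pi * (x \<bullet> t))) * f t) \<in> borel_measurable lebesgue" using fm by measurable
      show "(\<lambda>t. cis (- (2 * pi * (x \<bullet> t))) * f' t) \<in> borel_measurable lebesgue"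
        using measurable_completion[OF f'm] by measurable
      show "AE t in lebesgue. cis (- (2 * pi * (x \<bullet> t))) * f t = cis (- (2 * pi * (x \<bullet> t))) * f' t"
        using ae by eventually_elim simp
    qed
    also have "\<dots> = (\<integral>t. cis (- (2 * pi * (x \<bullet> t))) * f' t \<partial>lborel)"
      by (rule integral_completion) (use f'm in measurable)
    finally show ?thesis .
  qed
  have pm: "(\<lambda>p. cis (- (2 * pi * (fst p \<bullet> snd p)))) \<in> borel_measurable (borel :: ('a \<times> 'a) measure)"
    by (intro borel_measurable_continuous_onI continuous_intros)
  have "case_prod (\<lambda>x t. cis (- (2 * pi * (x \<bullet> t))) * f' t) \<in> borel_measurable (lborel \<Otimes>\<^sub>M lborel)"
  proof -
    have pm': "(\<lambda>p::'a \<times> 'a. cis (- (2 * pi * (fst p \<bullet> snd p)))) \<in> borel_measurable (lborel \<Otimes>\<^sub>M lborel)"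
      unfolding lborel_prod using pm by simp
    have "(\<lambda>p. cis (- (2 * pi * (fst p \<bullet> snd p))) * f' (snd p)) \<in> borel_measurable (lborel \<Otimes>\<^sub>M lborel)"
      using pm' f'm by measurable
    then show ?thesis by (simp add: case_prod_beta')
  qed
  then have "(\<lambda>x. \<integral>t. cis (- (2 * pi * (x \<bullet> t))) * f' t \<partial>lborel) \<in> borel_measurable lborel"
    by (rule lborel.borel_measurable_lebesgue_integral)
  then show ?thesis
    unfolding eq[abs_def] by (rule measurable_completion)
qed

lemma cos_ge_half: "\<bar>s\<bar> \<le> pi / 4 \<Longrightarrow> 1 / 2 \<le> cos s"
proof -
  assume s: "\<bar>s\<bar> \<le> pi / 4"
  have "cos (pi / 4) \<le> cos \<bar>s\<bar>"
    using s pi_gt_zero by (intro cos_monotone_0_pi_le) auto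
  moreover have "cos \<bar>s\<bar> = cos s" by (cases "0 \<le> s") auto
  ultimately have "sqrt 2 / 2 \<le> cos s" by (simp add: cos_45)
  moreover have "1 \<le> sqrt 2" by simp
  ultimately show ?thesis by linarith
qed

lemma cont_meas_leb:
  fixes f :: "'a::euclidean_space \<Rightarrow> 'b::euclidean_space"
  assumes "continuous_on UNIV f" shows "f \<in> borel_measurable lebesgue"
proof -
  have "f \<in> borel_measurable borel" using assms by (rule borel_measurable_continuous_onI)
  then have "f \<in> borel_measurable lborel" by simp
  then show ?thesis by (rule measurable_completion)
qed

lemma fourier_lower:
  fixes E :: "'a::euclidean_space set"
  assumes E: "E \<in> sets lebesgue" "emeasure lebesgue E < \<infinity>" "E \<subseteq> ball 0 r"
    and x: "norm x * r \<le> 1 / 8"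
  shows "measure lebesgue E / 2 \<le> cmod (fourier (indicator E) x)"
proof -
  have ii: "integrable lebesgue (\<lambda>t. cis (- (2 * pi * (x \<bullet> t))) * (indicator E t :: complex))"
    using E by (intro integrableI_bounded_set[where A=E and B=1]) (auto simp: norm_mult)
  have ir: "integrable lebesgue (\<lambda>t. indicator E t :: real)"
    using E by (intro integrable_real_indicator) auto
  have "Re (fourier (indicator E) x) = (\<integral>t. Re (cis (- (2 * pi * (x \<bullet> t))) * (indicator E t :: complex)) \<partial>lebesgue)"
    unfolding fourier_def by (rule integral_Re[OF ii, symmetric])
  also have "\<dots> = (\<integral>t. cos (2 * pi * (x \<bullet> t)) * indicator E t \<partial>lebesgue)"
    by (intro Bochner_Integration.integral_cong refl) (auto simp: split: split_indicator)
  also have "\<dots> \<ge> (\<integral>t. (1 / 2) * indicator E t \<partial>lebesgue)"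
  proof (rule Bochner_Integration.integral_mono)
    show "integrable lebesgue (\<lambda>t. 1 / 2 * indicator E t :: real)" using ir by simp
    show "integrable lebesgue (\<lambda>t. cos (2 * pi * (x \<bullet> t)) * indicator E t)"
    proof (rule Bochner_Integration.integrable_bound[OF ir])
      have "(\<lambda>t. cos (2 * pi * (x \<bullet> t))) \<in> borel_measurable lebesgue"
        by (intro cont_meas_leb continuous_intros)
      then show "(\<lambda>t. cos (2 * pi * (x \<bullet> t)) * indicator E t) \<in> borel_measurable lebesgue"
        using E(1) by measurable
    qed (auto split: split_indicator)
    fix t
    show "1 / 2 * indicator E t \<le> cos (2 * pi * (x \<bullet> t)) * indicator E t"
    proof (cases "t \<in> E")
      case True
      then have "norm t < r" using E(3) by auto
      have "\<bar>x \<bullet> t\<bar> \<le> norm x * norm t" by (rule Cauchy_Schwarz_ineq2)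
      also have "\<dots> \<le> norm x * r" using \<open>norm t < r\<close> by (intro mult_left_mono) auto
      finally have "\<bar>x \<bullet> t\<bar> \<le> 1 / 8" using x by simp
      then have "\<bar>2 * pi * (x \<bullet> t)\<bar> \<le> pi / 4"
        using pi_gt_zero by (simp add: abs_mult)
      then show ?thesis using True cos_ge_half by simp
    qed simp
  qed
  also have "(\<integral>t. (1 / 2) * indicator E t \<partial>lebesgue) = measure lebesgue E / 2"
    using E by simp
  finally show ?thesis using complex_Re_le_cmod order_trans by blast
qed




lemma cube_box: "cube r = box (\<Sum>b\<in>Basis. (- (r/2)) *\<^sub>R b) (\<Sum>b\<in>Basis. (r/2) *\<^sub>R b :: 'a::euclidean_space)"
proof -
  have ip: "(\<Sum>b\<in>Basis. c *\<^sub>R b) \<bullet> i = c" if "i \<in> Basis" for c and i :: 'a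
    using that by (rule inner_sum_left_Basis)
  show ?thesis
    unfolding cube_def box_def using ip[of _ "- (r/2)"] ip[of _ "r/2"] by auto
qed

lemma cube_sets[measurable]: "cube r \<in> sets (lebesgue :: 'a::euclidean_space measure)"
  unfolding cube_box by (intro sets_completionI_sets) simp

lemma cube_finite: "emeasure lebesgue (cube r :: 'a::euclidean_space set) < \<infinity>"
  unfolding cube_box using emeasure_lborel_box_finite by (simp add: emeasure_completion)

lemma cube_open: "open (cube r :: 'a::euclidean_space set)"
  unfolding cube_box by (rule open_box)

lemma cube_uminus: "(- x \<in> cube r) \<longleftrightarrow> (x \<in> cube r)"
  by (auto simp: cube_def)

lemma cube_0: "r > 0 \<Longrightarrow> (0::'a::euclidean_space) \<in> cube r"
  by (auto simp: cube_def)

lemma cube_norm: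
  assumes "x \<in> cube 1" shows "norm (x::'a::euclidean_space) \<le> real DIM('a) / 2"
proof -
  have "norm x \<le> (\<Sum>b\<in>Basis. \<bar>x \<bullet> b\<bar>)" by (rule norm_le_l1)
  also have "\<dots> \<le> (\<Sum>b\<in>(Basis::'a set). 1 / 2)"
    using assms by (intro sum_mono) (auto simp: cube_def abs_less_iff less_imp_le)
  also have "\<dots> = real DIM('a) / 2" by simp
  finally show ?thesis .
qed

lemma ball_pos: "0 < r \<Longrightarrow> 0 < emeasure lebesgue (ball (0::'a::euclidean_space) r)"
proof -
  assume r: "0 < r"
  have "emeasure lebesgue (ball (0::'a) r) = emeasure lborel (ball (0::'a) r)"
    by (simp add: emeasure_completion)
  also have "\<dots> = ennreal (unit_ball_vol (DIM('a)) * r ^ DIM('a))"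
    using less_imp_le[OF r] by (rule emeasure_ball)
  also have "\<dots> > 0" using r less_imp_le[OF r] by simp
  finally show ?thesis .
qed




theorem theorem2p2:
  fixes \<rho>X \<rho>Y :: "('a::euclidean_space \<Rightarrow> ennreal) \<Rightarrow> ennreal"
    and \<alpha> u v :: "'a \<Rightarrow> real"
    and C :: real
  assumes X: "ri_norm \<rho>X" and Y: "ri_norm \<rho>Y"
    and alpha: "\<alpha> \<in> alpha_class"
    and u_meas: "u \<in> borel_measurable lebesgue" and u_nonneg: "\<forall>x. 0 \<le> u x"
    and v_meas: "v \<in> borel_measurable lebesgue" and v_nonneg: "\<forall>x. 0 \<le> v x"
    and v_nonzero: "\<not> (AE x in lebesgue. v x = 0)"
    and C_pos: "C > 0"
    and ineq: "\<forall>f. integrable lebesgue f \<and> in_ri_space \<rho>X (\<lambda>x. complex_of_real (u x) * f x) \<longrightarrow>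
        in_ri_space \<rho>Y (\<lambda>x. complex_of_real (v x) * fourier f x) \<and>
        ri_norm_of \<rho>Y (\<lambda>x. complex_of_real (v x) * fourier f x)
          \<le> ennreal C * ri_norm_of \<rho>X (\<lambda>x. complex_of_real (u x) * f x)"
  shows "(AE x in lebesgue. 0 < u x)
    \<and> (\<exists>B::real. \<forall>x. conv v (qcube 1) x \<le> ennreal B)
    \<and> (AE x in lebesgue. 0 < conv v \<alpha> x \<and> conv v \<alpha> x < \<infinity>)
    \<and> (\<forall>f. integrable lebesgue f \<and> in_ri_space \<rho>X (\<lambda>x. complex_of_real (u x) * f x) \<longrightarrow>
        in_ri_space \<rho>Y (\<lambda>x. complex_of_real (enn2real (conv v \<alpha> x)) * fourier f x) \<and>
        ri_norm_of \<rho>Y (\<lambda>x. complex_of_real (enn2real (conv v \<alpha> x)) * fourier f x)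
          \<le> ennreal C * ri_norm_of \<rho>X (\<lambda>x. complex_of_real (u x) * f x))"
proof -
  note [measurable] = u_meas v_meas
  have \<alpha>m[measurable]: "\<alpha> \<in> borel_measurable lebesgue" and \<alpha>pos: "\<And>x. 0 < \<alpha> x"
    and \<alpha>int: "(\<integral>\<^sup>+x. ennreal (\<alpha> x) \<partial>lebesgue) = 1"
    using alpha by (auto simp: alpha_class_def)
  obtain v' where v': "v' \<in> borel_measurable lborel" "\<forall>x. 0 \<le> v' x" "AE x in lebesgue. v x = v' x"
    using borel_rep[OF v_meas] v_nonneg by blast
  obtain \<alpha>' where \<alpha>': "\<alpha>' \<in> borel_measurable lborel" "\<forall>x. 0 \<le> \<alpha>' x" "AE x in lebesgue. \<alpha> x = \<alpha>' x"
    using borel_rep[OF \<alpha>m] \<alpha>pos less_imp_le by blast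
  have \<alpha>'nn: "(\<integral>\<^sup>+x. ennreal (\<alpha>' x) \<partial>lborel) = 1"
  proof -
    have "(\<integral>\<^sup>+x. ennreal (\<alpha>' x) \<partial>lborel) = (\<integral>\<^sup>+x. ennreal (\<alpha>' x) \<partial>lebesgue)"
      by (simp add: nn_integral_completion)
    also have "\<dots> = (\<integral>\<^sup>+x. ennreal (\<alpha> x) \<partial>lebesgue)"
      using \<alpha>'(3) by (intro nn_integral_cong_AE) (auto elim!: eventually_mono)
    finally show ?thesis using \<alpha>int by simp
  qed
  have \<alpha>'i: "integrable lborel \<alpha>'"
    using \<alpha>'(1,2) \<alpha>'nn by (intro integrableI_nonneg) auto
  have \<alpha>'1: "integral\<^sup>L lborel \<alpha>' = 1"
  proof -
    have "ennreal (integral\<^sup>L lborel \<alpha>') = 1"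
      using nn_integral_eq_integral[OF \<alpha>'i] \<alpha>'(2) \<alpha>'nn by simp
    moreover have "0 \<le> integral\<^sup>L lborel \<alpha>'" using \<alpha>'(2) by (intro integral_nonneg_AE) auto
    ultimately show ?thesis by simp
  qed
  define Cv where "Cv x = (\<integral>\<^sup>+y. ennreal (v' (x - y) * \<alpha>' y) \<partial>lborel)" for x
  have convCv: "conv v \<alpha> x = Cv x" for x
    unfolding Cv_def by (rule conv_borel[OF v'(3) \<alpha>'(3) v'(1) \<alpha>'(1)])
  have Cvm[measurable]: "Cv \<in> borel_measurable lebesgue"
    unfolding Cv_def[abs_def] using conv_borel_meas[OF v'(1) \<alpha>'(1)] by (rule measurable_completion)
  have convm[measurable]: "conv v \<alpha> \<in> borel_measurable lebesgue"
    using Cvm by (simp add: convCv[abs_def])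
  have convpos: "0 < conv v \<alpha> x" for x
  proof (rule ccontr)
    assume "\<not> 0 < conv v \<alpha> x"
    then have "conv v \<alpha> x = 0" by simp
    then have "AE y in lebesgue. ennreal (v (x - y) * \<alpha> y) = 0"
      unfolding conv_def
      using invmap_comp_meas[OF invmap_minus[of x] v_meas]
      by (subst (asm) nn_integral_0_iff_AE) auto
    then have "AE y in lebesgue. v (x - y) = 0"
    proof (rule eventually_mono)
      fix y assume "ennreal (v (x - y) * \<alpha> y) = 0"
      then have "v (x - y) * \<alpha> y \<le> 0" by (simp add: ennreal_eq_0_iff)
      then show "v (x - y) = 0"
        using v_nonneg \<alpha>pos[of y] by (metis antisym mult_le_0_iff not_less)
    qed
    then have "AE z in lebesgue. v (x - (x - z)) = 0"
      by (rule invmap_AE[OF invmap_minus[of x]])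
    then show False using v_nonzero by simp
  qed
  define K where "K f = ennreal C * ri_norm_of \<rho>X (\<lambda>x. complex_of_real (u x) * f x)" for f
  have modbd: "\<rho>Y (\<lambda>x. ennreal (v x * cmod (fourier f (x + y)))) \<le> K f"
    if fi: "integrable lebesgue f" and fX: "in_ri_space \<rho>X (\<lambda>x. complex_of_real (u x) * f x)" for f y
  proof -
    define fy where "fy t = cis (- (2 * pi * (y \<bullet> t))) * f t" for t
    have fyi: "integrable lebesgue fy" unfolding fy_def[abs_def] by (rule modulate_integrable[OF fi])
    have nrm: "cmod (complex_of_real (u x) * fy x) = cmod (complex_of_real (u x) * f x)" for x
      by (simp add: fy_def norm_mult)
    have eqX: "ri_norm_of \<rho>X (\<lambda>x. complex_of_real (u x) * fy x) = ri_norm_of \<rho>X (\<lambda>x. complex_of_real (u x) * f x)"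
      unfolding ri_norm_of_def nrm ..
    have fym: "(\<lambda>x. complex_of_real (u x) * fy x) \<in> borel_measurable lebesgue"
    proof -
      have "(\<lambda>x. complex_of_real (u x) * f x) \<in> borel_measurable lebesgue"
        using fX by (simp add: in_ri_space_def)
      then have "(\<lambda>x. cis (- (2 * pi * (y \<bullet> x))) * (complex_of_real (u x) * f x)) \<in> borel_measurable lebesgue"
        by measurable
      then show ?thesis by (simp add: fy_def mult_ac)
    qed
    have fyX: "in_ri_space \<rho>X (\<lambda>x. complex_of_real (u x) * fy x)"
      using fX fym eqX by (simp add: in_ri_space_def)
    have "ri_norm_of \<rho>Y (\<lambda>x. complex_of_real (v x) * fourier fy x) \<le> K fy"
      using ineq fyi fyX by (simp add: K_def)
    moreover have "K fy = K f" by (simp add: K_def eqX)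
    moreover have "ri_norm_of \<rho>Y (\<lambda>x. complex_of_real (v x) * fourier fy x) = \<rho>Y (\<lambda>x. ennreal (v x * cmod (fourier f (x + y))))"
      unfolding ri_norm_of_def fy_def fourier_modulate using v_nonneg by (simp add: norm_mult)
    ultimately show ?thesis by simp
  qed
  have transbd: "\<rho>Y (\<lambda>x. ennreal (v (x - y) * cmod (fourier f x))) \<le> K f"
    if fi: "integrable lebesgue f" and fX: "in_ri_space \<rho>X (\<lambda>x. complex_of_real (u x) * f x)" for f y
  proof -
    note fm[measurable] = fourier_meas[OF fi]
    define h where "h z = ennreal (v z * cmod (fourier f (z + y)))" for z
    have hm: "h \<in> borel_measurable lebesgue"
    proof -
      have "(\<lambda>z. fourier f (z + y)) \<in> borel_measurable lebesgue"
        using invmap_comp_meas[OF invmap_plus'[of y] fm] .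
      then show ?thesis unfolding h_def[abs_def] by measurable
    qed
    have "\<rho>Y (\<lambda>x. h (x - y)) = \<rho>Y h" by (rule rho_invmap[OF Y invmap_minus'[of y] hm])
    moreover have "h = (\<lambda>x. ennreal (v x * cmod (fourier f (x + y))))" by (simp add: h_def[abs_def])
    ultimately show ?thesis using modbd[OF fi fX, of y] by simp
  qed
  have K4: "\<rho>Y (\<lambda>x. conv v \<alpha> x * ennreal (cmod (fourier f x))) \<le> K f"
    if fi: "integrable lebesgue f" and fX: "in_ri_space \<rho>X (\<lambda>x. complex_of_real (u x) * f x)" for f
  proof -
    note fm[measurable] = fourier_meas[OF fi]
    have "\<rho>Y (\<lambda>x. Cv x * ennreal (cmod (fourier f x))) \<le> K f"
      unfolding Cv_def
      by (rule minkowski[OF Y v'(1) _ v'(3) v_meas \<alpha>'(1) _ \<alpha>'i \<alpha>'1 _ _ transbd[OF fi fX]])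
         (use v'(2) \<alpha>'(2) in auto)
    then show ?thesis by (simp add: convCv)
  qed
  have claim4: "in_ri_space \<rho>Y (\<lambda>x. complex_of_real (enn2real (conv v \<alpha> x)) * fourier f x) \<and>
        ri_norm_of \<rho>Y (\<lambda>x. complex_of_real (enn2real (conv v \<alpha> x)) * fourier f x) \<le> K f"
    if fi: "integrable lebesgue f" and fX: "in_ri_space \<rho>X (\<lambda>x. complex_of_real (u x) * f x)" for f
  proof -
    note fm[measurable] = fourier_meas[OF fi]
    have le: "ri_norm_of \<rho>Y (\<lambda>x. complex_of_real (enn2real (conv v \<alpha> x)) * fourier f x)
        \<le> \<rho>Y (\<lambda>x. conv v \<alpha> x * ennreal (cmod (fourier f x)))"
      unfolding ri_norm_of_def
    proof (rule rho_mono[OF Y])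
      show "(\<lambda>x. conv v \<alpha> x * ennreal (cmod (fourier f x))) \<in> borel_measurable lebesgue" by measurable
      show "(\<lambda>x. ennreal (cmod (complex_of_real (enn2real (conv v \<alpha> x)) * fourier f x))) \<in> borel_measurable lebesgue"
        by measurable
      show "AE x in lebesgue. ennreal (cmod (complex_of_real (enn2real (conv v \<alpha> x)) * fourier f x))
          \<le> conv v \<alpha> x * ennreal (cmod (fourier f x))"
      proof (rule AE_I2)
        fix x
        have "ennreal (cmod (complex_of_real (enn2real (conv v \<alpha> x)) * fourier f x))
            = ennreal (enn2real (conv v \<alpha> x)) * ennreal (cmod (fourier f x))"
          by (simp add: norm_mult ennreal_mult')
        also have "\<dots> \<le> conv v \<alpha> x * ennreal (cmod (fourier f x))"
          apply (intro mult_right_mono)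
           apply (cases "conv v \<alpha> x")
            apply simp_all
          done
        finally show "ennreal (cmod (complex_of_real (enn2real (conv v \<alpha> x)) * fourier f x))
            \<le> conv v \<alpha> x * ennreal (cmod (fourier f x))" .
      qed
    qed
    also have "\<dots> \<le> K f" by (rule K4[OF fi fX])
    finally have 1: "ri_norm_of \<rho>Y (\<lambda>x. complex_of_real (enn2real (conv v \<alpha> x)) * fourier f x) \<le> K f" .
    have "K f < \<infinity>"
      using fX by (simp add: K_def in_ri_space_def ennreal_mult_less_top)
    then show ?thesis using 1 by (simp add: in_ri_space_def)
  qed
  have ballL[measurable]: "ball c r \<in> sets lebesgue" for c :: 'a and r
    by (intro sets_completionI_sets) simp
  have ballF: "emeasure lebesgue (ball c r) < \<infinity>" for c :: 'a and r
    using emeasure_lborel_ball_finite[of c r] by (simp add: emeasure_completion)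
  have fin_sub: "emeasure lebesgue E < \<infinity>" if "E \<subseteq> ball 0 r" "E \<in> sets lebesgue" for E :: "'a set" and r
    using emeasure_mono[OF that(1) ballL[of 0 r]] ballF[of 0 r] by (simp add: top_unique)
  have meas_pos: "0 < measure lebesgue E" if "emeasure lebesgue E \<noteq> 0" "emeasure lebesgue E < \<infinity>" for E :: "'a set"
    using that by (simp add: emeasure_eq_ennreal_measure measure_nonneg zero_less_measure_iff)
  have ind_int: "integrable lebesgue (indicator E :: 'a \<Rightarrow> complex)"
    if "E \<in> sets lebesgue" "emeasure lebesgue E < \<infinity>" for E :: "'a set"
    using that by (intro integrableI_bounded_set[where A=E and B=1]) (auto split: split_indicator)
  have claim1: "AE x in lebesgue. 0 < u x"
  proof (rule ccontr)
    assume nAE: "\<not> (AE x in lebesgue. 0 < u x)"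
    define Z where "Z = {x. u x = 0}"
    have Zm[measurable]: "Z \<in> sets lebesgue"
    proof -
      have "{x \<in> space lebesgue. u x = 0} \<in> sets lebesgue" by measurable
      then show ?thesis by (simp add: Z_def)
    qed
    have Znz: "emeasure lebesgue Z \<noteq> 0"
    proof
      assume "emeasure lebesgue Z = 0"
      moreover have "{x \<in> space lebesgue. \<not> 0 < u x} = Z"
        using u_nonneg by (auto simp: Z_def intro: antisym)
      ultimately have "AE x in lebesgue. 0 < u x" by (subst AE_iff_measurable[OF Zm]) auto
      then show False using nAE by simp
    qed
    obtain m :: nat where Em: "emeasure lebesgue (Z \<inter> ball 0 (real m)) \<noteq> 0"
    proof (rule ccontr)
      assume "\<not> thesis"
      then have "\<And>m::nat. Z \<inter> ball 0 (real m) \<in> null_sets lebesgue"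
        using that by (auto simp: null_sets_def)
      then have "(\<Union>m::nat. Z \<inter> ball 0 (real m)) \<in> null_sets lebesgue" by blast
      moreover have "(\<Union>m::nat. Z \<inter> ball 0 (real m)) = Z"
        by (auto simp: reals_Archimedean2)
      ultimately show False using Znz by (simp add: null_sets_def)
    qed
    define E where "E = Z \<inter> ball 0 (real m)"
    have Es[measurable]: "E \<in> sets lebesgue" unfolding E_def by measurable
    have Esub: "E \<subseteq> ball 0 (real m)" by (auto simp: E_def)
    have Ef: "emeasure lebesgue E < \<infinity>" by (rule fin_sub[OF Esub Es])
    have Epos: "0 < measure lebesgue E" using meas_pos Em Ef by (simp add: E_def)
    have m0: "0 < m"
    proof (rule ccontr)
      assume "\<not> 0 < m" then have "E = {}" by (auto simp: E_def)
      then show False using Epos by simp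
    qed
    define f0 where "f0 = (indicator E :: 'a \<Rightarrow> complex)"
    have f0i: "integrable lebesgue f0" unfolding f0_def by (rule ind_int[OF Es Ef])
    have uf0: "(\<lambda>x. complex_of_real (u x) * f0 x) = (\<lambda>x. 0)"
      by (auto simp: f0_def E_def Z_def split: split_indicator)
    have X0: "ri_norm_of \<rho>X (\<lambda>x. complex_of_real (u x) * f0 x) = 0"
      unfolding uf0 ri_norm_of_def by (simp add: rho_zero[OF X])
    have f0X: "in_ri_space \<rho>X (\<lambda>x. complex_of_real (u x) * f0 x)"
      using X0 unfolding in_ri_space_def uf0 by simp
    note fm[measurable] = fourier_meas[OF f0i]
    have "\<rho>Y (\<lambda>x. conv v \<alpha> x * ennreal (cmod (fourier f0 x))) \<le> 0"
      using K4[OF f0i f0X] X0 by (simp add: K_def)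
    then have "AE x in lebesgue. conv v \<alpha> x * ennreal (cmod (fourier f0 x)) = 0"
      by (subst rho_zero_iff[OF Y, symmetric]) (auto intro: antisym)
    then have AEn: "AE x in lebesgue. x \<notin> ball (0::'a) (1 / (8 * real m))"
    proof (rule eventually_mono)
      fix x assume z: "conv v \<alpha> x * ennreal (cmod (fourier f0 x)) = 0"
      show "x \<notin> ball 0 (1 / (8 * real m))"
      proof
      assume xb: "x \<in> ball 0 (1 / (8 * real m))"
      have "norm x * real m \<le> 1 / 8"
        using xb m0 by (simp add: field_simps)
      then have "measure lebesgue E / 2 \<le> cmod (fourier f0 x)"
        unfolding f0_def by (rule fourier_lower[OF Es Ef Esub])
      then have "0 < cmod (fourier f0 x)" using Epos by linarith
      then show False using z convpos[of x] by simp
      qed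
    qed
    have z: "emeasure lebesgue (ball (0::'a) (1 / (8 * real m))) = 0"
      using AEn by (subst (asm) AE_iff_measurable[OF ballL]) auto
    have "0 < emeasure lebesgue (ball (0::'a) (1 / (8 * real m)))"
      by (rule ball_pos) (use m0 in simp)
    then show False unfolding z by simp
  qed
  define r where "r = 1 / (4 * real DIM('a))"
  have r0: "0 < r" by (simp add: r_def)
  obtain N :: nat where EN: "emeasure lebesgue (ball 0 r \<inter> {x. u x \<le> real N}) \<noteq> 0"
  proof (rule ccontr)
    assume "\<not> thesis"
    have um: "{x. u x \<le> real N} \<in> sets lebesgue" for N :: nat
    proof -
      have "{x \<in> space lebesgue. u x \<le> real N} \<in> sets lebesgue" by measurable
      then show ?thesis by simp
    qed
    from \<open>\<not> thesis\<close> have "\<And>N::nat. ball 0 r \<inter> {x. u x \<le> real N} \<in> null_sets lebesgue"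
      using that um by (auto simp: null_sets_def)
    then have "(\<Union>N::nat. ball 0 r \<inter> {x. u x \<le> real N}) \<in> null_sets lebesgue" by blast
    moreover have "(\<Union>N::nat. ball 0 r \<inter> {x. u x \<le> real N}) = ball (0::'a) r"
      by (auto simp: real_arch_simple)
    ultimately have z: "emeasure lebesgue (ball (0::'a) r) = 0" by (simp add: null_sets_def)
    have "0 < emeasure lebesgue (ball (0::'a) r)" by (rule ball_pos[OF r0])
    then show False unfolding z by simp
  qed
  define E where "E = ball 0 r \<inter> {x. u x \<le> real N}"
  have Es[measurable]: "E \<in> sets lebesgue"
  proof -
    have "{x \<in> space lebesgue. u x \<le> real N} \<in> sets lebesgue" by measurable
    then show ?thesis unfolding E_def by (intro sets.Int ballL) simp
  qed
  have Esub: "E \<subseteq> ball 0 r" by (auto simp: E_def)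
  have Ef: "emeasure lebesgue E < \<infinity>" by (rule fin_sub[OF Esub Es])
  have Epos: "0 < measure lebesgue E" using meas_pos EN Ef by (simp add: E_def)
  define f0 where "f0 = (indicator E :: 'a \<Rightarrow> complex)"
  have f0i: "integrable lebesgue f0" unfolding f0_def by (rule ind_int[OF Es Ef])
  note F0m[measurable] = fourier_meas[OF f0i]
  have uf0le: "ri_norm_of \<rho>X (\<lambda>x. complex_of_real (u x) * f0 x) \<le> ennreal (real N) * \<rho>X (indicator E)"
  proof -
    have "ri_norm_of \<rho>X (\<lambda>x. complex_of_real (u x) * f0 x) \<le> \<rho>X (\<lambda>x. ennreal (real N) * indicator E x)"
      unfolding ri_norm_of_def
    proof (rule rho_mono[OF X])
      show "(\<lambda>x. ennreal (real N) * indicator E x) \<in> borel_measurable lebesgue" by measurable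
      show "(\<lambda>x. ennreal (cmod (complex_of_real (u x) * f0 x))) \<in> borel_measurable lebesgue"
        unfolding f0_def by measurable
      show "AE x in lebesgue. ennreal (cmod (complex_of_real (u x) * f0 x)) \<le> ennreal (real N) * indicator E x"
        using u_nonneg by (intro AE_I2) (auto simp: f0_def E_def split: split_indicator)
    qed
    also have "\<dots> = ennreal (real N) * \<rho>X (indicator E)"
      by (rule rho_hom[OF X]) auto
    finally show ?thesis .
  qed
  have f0X: "in_ri_space \<rho>X (\<lambda>x. complex_of_real (u x) * f0 x)"
  proof -
    have "\<rho>X (indicator E) < \<infinity>" by (rule rho_ind_finite[OF X Es Ef])
    then have "ri_norm_of \<rho>X (\<lambda>x. complex_of_real (u x) * f0 x) < \<infinity>"
      using uf0le by (simp add: ennreal_mult_less_top le_less_trans)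
    moreover have "(\<lambda>x. complex_of_real (u x) * f0 x) \<in> borel_measurable lebesgue"
      unfolding f0_def by measurable
    ultimately show ?thesis by (simp add: in_ri_space_def)
  qed
  define Mf where "Mf = K f0"
  have Mff: "Mf < \<infinity>"
    using f0X by (simp add: Mf_def K_def in_ri_space_def ennreal_mult_less_top)
  define c where "c = measure lebesgue E / 2"
  have c0: "0 < c" using Epos by (simp add: c_def)
  define F0 where "F0 x = cmod (fourier f0 x)" for x
  have F0m'[measurable]: "F0 \<in> borel_measurable lebesgue" unfolding F0_def[abs_def] by measurable
  have F0c: "c \<le> F0 x" if "x \<in> cube 1" for x
  proof -
    have "norm x * r \<le> (real DIM('a) / 2) * r"
      using cube_norm[OF that] r0 by (intro mult_right_mono) auto
    also have "\<dots> = 1 / 8" by (simp add: r_def)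
    finally have "norm x * r \<le> 1 / 8" .
    then show ?thesis
      unfolding c_def F0_def f0_def by (rule fourier_lower[OF Es Ef Esub])
  qed
  have KB: "\<rho>Y (\<lambda>w. ennreal (v (w + b) * indicator (cube 1) w)) \<le> ennreal (1 / c) * Mf" for b
  proof -
    have vb[measurable]: "(\<lambda>w. v (w + b)) \<in> borel_measurable lebesgue"
      by (rule invmap_comp_meas[OF invmap_plus'[of b] v_meas])
    have "\<rho>Y (\<lambda>w. ennreal (v (w + b) * indicator (cube 1) w)) \<le> \<rho>Y (\<lambda>w. ennreal (1 / c) * ennreal (v (w + b) * F0 w))"
    proof (rule rho_mono[OF Y])
      show "(\<lambda>w. ennreal (1 / c) * ennreal (v (w + b) * F0 w)) \<in> borel_measurable lebesgue" by measurable
      show "(\<lambda>w. ennreal (v (w + b) * indicator (cube 1) w)) \<in> borel_measurable lebesgue" by measurable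
      show "AE w in lebesgue. ennreal (v (w + b) * indicator (cube 1) w) \<le> ennreal (1 / c) * ennreal (v (w + b) * F0 w)"
      proof (rule AE_I2)
        fix w
        have "v (w + b) * indicator (cube 1) w \<le> 1 / c * (v (w + b) * F0 w)"
        proof (cases "w \<in> cube 1")
          case True
          have "1 \<le> F0 w / c" using F0c[OF True] c0 by simp
          then have "v (w + b) * 1 \<le> v (w + b) * (F0 w / c)"
            using v_nonneg by (intro mult_left_mono) auto
          then show ?thesis using True by simp
        next
          case False
          then show ?thesis using v_nonneg c0 F0_def by simp
        qed
        then have "ennreal (v (w + b) * indicator (cube 1) w) \<le> ennreal (1 / c * (v (w + b) * F0 w))"
          by (rule ennreal_leI)
        also have "\<dots> = ennreal (1 / c) * ennreal (v (w + b) * F0 w)"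
          by (rule ennreal_mult') (use c0 in simp)
        finally show "ennreal (v (w + b) * indicator (cube 1) w) \<le> ennreal (1 / c) * ennreal (v (w + b) * F0 w)" .
      qed
    qed
    also have "\<dots> = ennreal (1 / c) * \<rho>Y (\<lambda>w. ennreal (v (w + b) * F0 w))"
      using c0 by (intro rho_hom[OF Y]) auto
    also have "\<rho>Y (\<lambda>w. ennreal (v (w + b) * F0 w)) = \<rho>Y (\<lambda>x. ennreal (v x * F0 (x + - b)))"
    proof -
      have hm: "(\<lambda>x. ennreal (v x * F0 (x + - b))) \<in> borel_measurable lebesgue"
        using invmap_comp_meas[OF invmap_plus'[of "-b"] F0m'] by measurable
      show ?thesis using rho_invmap[OF Y invmap_plus'[of b] hm] by simp
    qed
    also have "\<rho>Y (\<lambda>x. ennreal (v x * F0 (x + - b))) \<le> Mf"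
      using modbd[OF f0i f0X, of "-b"] by (simp add: F0_def Mf_def)
    finally show ?thesis by (simp add: mult_left_mono)
  qed
  have claim2: "\<exists>B::real. \<forall>x. conv v (qcube 1) x \<le> ennreal B"
  proof -
    obtain Cq :: real where Cq: "\<forall>g\<in>borel_measurable lebesgue. (\<integral>\<^sup>+x\<in>cube 1. g x \<partial>lebesgue) \<le> ennreal Cq * \<rho>Y g"
      using rho_int[OF Y cube_sets cube_finite] by blast
    define Kq where "Kq = ennreal Cq * (ennreal (1 / c) * Mf)"
    have Kqf: "Kq < \<infinity>" using Mff by (simp add: Kq_def ennreal_mult_less_top)
    have bd: "conv v (qcube 1) a \<le> Kq" for a
    proof -
      define h where "h y = ennreal (v (a - y) * qcube 1 y)" for y
      have hm: "h \<in> borel_measurable lebesgue"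
        unfolding h_def[abs_def] qcube_def
        using invmap_comp_meas[OF invmap_minus[of a] v_meas] by measurable
      define g where "g w = ennreal (v (w + a) * indicator (cube 1) w)" for w
      have gm: "g \<in> borel_measurable lebesgue"
        unfolding g_def[abs_def] using invmap_comp_meas[OF invmap_plus'[of a] v_meas] by measurable
      have "conv v (qcube 1) a = (\<integral>\<^sup>+y. h y \<partial>lebesgue)" by (simp add: conv_def h_def)
      also have "\<dots> = (\<integral>\<^sup>+w. h (0 - w) \<partial>lebesgue)"
        by (rule invmap_nn_integral[OF invmap_minus[of 0] hm, symmetric])
      also have "\<dots> = (\<integral>\<^sup>+w\<in>cube 1. g w \<partial>lebesgue)"
        by (intro nn_integral_cong) (auto simp: h_def g_def qcube_def cube_uminus algebra_simps split: split_indicator)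
      also have "\<dots> \<le> ennreal Cq * \<rho>Y g" using Cq gm by blast
      also have "\<rho>Y g \<le> ennreal (1 / c) * Mf" using KB[of a] by (simp add: g_def[abs_def])
      finally show ?thesis by (simp add: Kq_def mult_left_mono)
    qed
    show ?thesis
      using bd Kqf by (intro exI[of _ "enn2real Kq"]) (simp add: ennreal_enn2real_if less_top)
  qed
  have loc: "AE x in lebesgue. x - a \<in> cube 1 \<longrightarrow> Cv x < \<infinity>" for a
  proof -
    define Fa where "Fa x = (indicator (cube 1) (x - a) :: real)" for x
    have Fam[measurable]: "Fa \<in> borel_measurable lebesgue"
      unfolding Fa_def[abs_def]
      using invmap_comp_meas[OF invmap_minus'[of a], of "indicator (cube 1)" borel] by simp
    have bd: "\<rho>Y (\<lambda>x. ennreal (v (x - y) * Fa x)) \<le> ennreal (1 / c) * Mf" for y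
    proof -
      define h where "h w = ennreal (v (w + (a - y)) * indicator (cube 1) w)" for w
      have hm: "h \<in> borel_measurable lebesgue"
        unfolding h_def[abs_def] using invmap_comp_meas[OF invmap_plus'[of "a - y"] v_meas] by measurable
      have "\<rho>Y (\<lambda>x. h (x - a)) = \<rho>Y h" by (rule rho_invmap[OF Y invmap_minus'[of a] hm])
      moreover have "(\<lambda>x. h (x - a)) = (\<lambda>x. ennreal (v (x - y) * Fa x))"
        by (simp add: h_def Fa_def algebra_simps)
      moreover have "\<rho>Y h \<le> ennreal (1 / c) * Mf" using KB[of "a - y"] by (simp add: h_def[abs_def])
      ultimately show ?thesis by simp
    qed
    have mk: "\<rho>Y (\<lambda>x. Cv x * ennreal (Fa x)) \<le> ennreal (1 / c) * Mf"
      unfolding Cv_def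
      by (rule minkowski[OF Y v'(1) _ v'(3) v_meas \<alpha>'(1) _ \<alpha>'i \<alpha>'1 Fam _ bd])
         (use v'(2) \<alpha>'(2) in \<open>auto simp: Fa_def\<close>)
    define Ea where "Ea = (\<lambda>x. x - a) -` cube 1"
    have Eas[measurable]: "Ea \<in> sets lebesgue"
      using measurable_sets[OF invmap_meas[OF invmap_minus'[of a]] cube_sets] by (simp add: Ea_def)
    have Eaf: "emeasure lebesgue Ea < \<infinity>"
      using invmap_emeasure[OF invmap_minus'[of a] cube_sets] cube_finite by (simp add: Ea_def)
    obtain Ca :: real where Ca: "\<forall>g\<in>borel_measurable lebesgue. (\<integral>\<^sup>+x\<in>Ea. g x \<partial>lebesgue) \<le> ennreal Ca * \<rho>Y g"
      using rho_int[OF Y Eas Eaf] by blast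
    have "(\<integral>\<^sup>+x\<in>Ea. Cv x * ennreal (Fa x) \<partial>lebesgue) \<le> ennreal Ca * \<rho>Y (\<lambda>x. Cv x * ennreal (Fa x))"
      using Ca by auto
    also have "\<dots> \<le> ennreal Ca * (ennreal (1 / c) * Mf)" using mk by (rule mult_left_mono) simp
    also have "\<dots> < \<infinity>" using Mff by (simp add: ennreal_mult_less_top)
    finally have "(\<integral>\<^sup>+x. Cv x * ennreal (Fa x) * indicator Ea x \<partial>lebesgue) \<noteq> \<infinity>" by simp
    then have "AE x in lebesgue. Cv x * ennreal (Fa x) * indicator Ea x \<noteq> \<infinity>"
      using Eas by (intro nn_integral_PInf_AE) measurable
    then show ?thesis
      by (rule eventually_mono) (auto simp: Fa_def Ea_def top.not_eq_extremum)
  qed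
  have claim3: "AE x in lebesgue. 0 < conv v \<alpha> x \<and> conv v \<alpha> x < \<infinity>"
  proof -
    define \<F> where "\<F> = range (\<lambda>a. {x::'a. x - a \<in> cube 1})"
    have op: "open S" if "S \<in> \<F>" for S
    proof -
      from that obtain a where "S = {x. x - a \<in> cube 1}" unfolding \<F>_def by blast
      then have S: "S = (\<lambda>x. x - a) -` cube 1" by auto
      show ?thesis unfolding S by (rule continuous_open_vimage[OF cube_open]) (intro continuous_intros)
    qed
    obtain \<F>' where F': "\<F>' \<subseteq> \<F>" "countable \<F>'" "\<Union>\<F>' = \<Union>\<F>"
      using Lindelof[of \<F>] op by metis
    have cov: "\<Union>\<F> = UNIV"
      using cube_0[of 1] by (auto simp: \<F>_def intro!: exI[of _ "{y. y - _ \<in> cube 1}"])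
    have "\<forall>S\<in>\<F>'. AE x in lebesgue. x \<in> S \<longrightarrow> Cv x < \<infinity>"
    proof
      fix S assume "S \<in> \<F>'"
      then have "S \<in> \<F>" using F'(1) by blast
      then obtain a where "S = {x. x - a \<in> cube 1}" unfolding \<F>_def by blast
      then show "AE x in lebesgue. x \<in> S \<longrightarrow> Cv x < \<infinity>" using loc[of a] by simp
    qed
    then have "AE x in lebesgue. \<forall>S\<in>\<F>'. x \<in> S \<longrightarrow> Cv x < \<infinity>"
      by (subst AE_ball_countable[OF F'(2)])
    then show ?thesis
    proof (rule eventually_mono)
      fix x assume H: "\<forall>S\<in>\<F>'. x \<in> S \<longrightarrow> Cv x < \<infinity>"
      have "x \<in> \<Union>\<F>'" using F'(3) cov by simp
      then have "Cv x < \<infinity>" using H by blast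
      then show "0 < conv v \<alpha> x \<and> conv v \<alpha> x < \<infinity>" using convpos[of x] by (simp add: convCv)
    qed
  qed
  show ?thesis
    using claim1 claim2 claim3 claim4 by (simp add: K_def)
qed


end
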